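(* Let $G$ be the full group of a Bratteli diagram $B$ whose path space $X$ is a Cantor set and such that $G$ acts minimally on $X$. If $G$ is a simple non-trivial group, then $B$ can be telescoped so that in the new diagram each pair of vertices from consecutive levels is connected by an even number (at least two) of edges.
   Context: A Bratteli diagram $B=(V,E)$: finite vertex sets $V_0=\{v_0\},V_1,\dots$, finite edge sets $E_1,E_2,\dots$, maps $s:E_i\to V_{i-1}$, $r:E_i\to V_i$ with $r(E_i)=V_i$, $s^{-1}(v)\ne\emptyset$ for all $v$, $r^{-1}(v)\ne\emptyset$ for $v\ne v_0$. Path space $X$: infinite paths $(e_1,e_2,\dots)$ from $v_0$, topologized by cylinder sets. $G_n$: homeomorphisms of $X$ that change only the first $n$ edges of each path, replacing $(e_1,\dots,e_n)$ by a path from $v_0$ ending at $r(e_n)$ (depending only on $(e_1,\dots,e_n)$); full group $G=\bigcup_nG_n$. A telescope of $B$ along $0=m_0<m_1<\cdots$ is the diagram $B'$ with $V'_n=V_{m_n}$ and $E'_n$ the set of finite paths of $B$ between levels $m_{n-1}$ and $m_n$ (it has the same path space and the same full group). *)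

theory Defs
  imports "HOL-Analysis.Analysis" "HOL-Algebra.Coset"
begin

text \<open>Bratteli diagram. Levels are indexed by nat: V n is the vertex set of level n,
  E n (n \<ge> 1) the edge set between levels n-1 and n, and s n, r n the source and
  range maps on E n.\<close>

definition bratteli ::
  "(nat \<Rightarrow> 'v set) \<Rightarrow> (nat \<Rightarrow> 'e set) \<Rightarrow> (nat \<Rightarrow> 'e \<Rightarrow> 'v) \<Rightarrow> (nat \<Rightarrow> 'e \<Rightarrow> 'v) \<Rightarrow> 'v \<Rightarrow> bool"
where
  "bratteli V E s r v0 \<longleftrightarrow>
     V 0 = {v0} \<and>
     (\<forall>n. finite (V n)) \<and> (\<forall>n. finite (E (Suc n))) \<and>
     (\<forall>n. \<forall>e\<in>E (Suc n). s (Suc n) e \<in> V n \<and> r (Suc n) e \<in> V (Suc n)) \<and>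
     (\<forall>n. r (Suc n) ` E (Suc n) = V (Suc n)) \<and>
     (\<forall>n. \<forall>v\<in>V n. \<exists>e\<in>E (Suc n). s (Suc n) e = v) \<and>
     (\<forall>n. \<forall>v\<in>V (Suc n). \<exists>e\<in>E (Suc n). r (Suc n) e = v)"

text \<open>Path space: an infinite path (e_1, e_2, ...) from v0 is represented by x with
  x k = e_(k+1).\<close>

definition pathspace ::
  "(nat \<Rightarrow> 'v set) \<Rightarrow> (nat \<Rightarrow> 'e set) \<Rightarrow> (nat \<Rightarrow> 'e \<Rightarrow> 'v) \<Rightarrow> (nat \<Rightarrow> 'e \<Rightarrow> 'v) \<Rightarrow> 'v \<Rightarrow> (nat \<Rightarrow> 'e) set"
where
  "pathspace V E s r v0 =
     {x. (\<forall>k. x k \<in> E (Suc k)) \<and> s 1 (x 0) = v0 \<and>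
         (\<forall>k. r (Suc k) (x k) = s (Suc (Suc k)) (x (Suc k)))}"

definition pathtop ::
  "(nat \<Rightarrow> 'v set) \<Rightarrow> (nat \<Rightarrow> 'e set) \<Rightarrow> (nat \<Rightarrow> 'e \<Rightarrow> 'v) \<Rightarrow> (nat \<Rightarrow> 'e \<Rightarrow> 'v) \<Rightarrow> 'v \<Rightarrow> (nat \<Rightarrow> 'e) topology"
where
  "pathtop V E s r v0 =
     subtopology (product_topology (\<lambda>k. discrete_topology (E (Suc k))) UNIV)
                 (pathspace V E s r v0)"

definition is_cantor_space :: "'a topology \<Rightarrow> bool" where
  "is_cantor_space T \<longleftrightarrow>
     T homeomorphic_space product_topology (\<lambda>_::nat. discrete_topology (UNIV :: bool set)) UNIV"

text \<open>G_n: homeomorphisms of X changing only the first n edges, the new first n edges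
  depending only on the old first n edges (maps are taken to be the identity off X).\<close>

definition Gn ::
  "(nat \<Rightarrow> 'v set) \<Rightarrow> (nat \<Rightarrow> 'e set) \<Rightarrow> (nat \<Rightarrow> 'e \<Rightarrow> 'v) \<Rightarrow> (nat \<Rightarrow> 'e \<Rightarrow> 'v) \<Rightarrow> 'v \<Rightarrow> nat
    \<Rightarrow> ((nat \<Rightarrow> 'e) \<Rightarrow> (nat \<Rightarrow> 'e)) set"
where
  "Gn V E s r v0 n =
     {g. homeomorphic_map (pathtop V E s r v0) (pathtop V E s r v0) g \<and>
         (\<forall>x. x \<notin> pathspace V E s r v0 \<longrightarrow> g x = x) \<and>
         (\<forall>x\<in>pathspace V E s r v0. \<forall>k\<ge>n. g x k = x k) \<and>
         (\<forall>x\<in>pathspace V E s r v0. \<forall>y\<in>pathspace V E s r v0.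
             (\<forall>k<n. x k = y k) \<longrightarrow> (\<forall>k<n. g x k = g y k))}"

definition fullgroup_set ::
  "(nat \<Rightarrow> 'v set) \<Rightarrow> (nat \<Rightarrow> 'e set) \<Rightarrow> (nat \<Rightarrow> 'e \<Rightarrow> 'v) \<Rightarrow> (nat \<Rightarrow> 'e \<Rightarrow> 'v) \<Rightarrow> 'v
    \<Rightarrow> ((nat \<Rightarrow> 'e) \<Rightarrow> (nat \<Rightarrow> 'e)) set"
where
  "fullgroup_set V E s r v0 = (\<Union>n. Gn V E s r v0 n)"

definition fullgroup ::
  "(nat \<Rightarrow> 'v set) \<Rightarrow> (nat \<Rightarrow> 'e set) \<Rightarrow> (nat \<Rightarrow> 'e \<Rightarrow> 'v) \<Rightarrow> (nat \<Rightarrow> 'e \<Rightarrow> 'v) \<Rightarrow> 'v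
    \<Rightarrow> ((nat \<Rightarrow> 'e) \<Rightarrow> (nat \<Rightarrow> 'e)) monoid"
where
  "fullgroup V E s r v0 = \<lparr>carrier = fullgroup_set V E s r v0, mult = (\<lambda>f g. f \<circ> g), one = id\<rparr>"

definition acts_minimally ::
  "(nat \<Rightarrow> 'v set) \<Rightarrow> (nat \<Rightarrow> 'e set) \<Rightarrow> (nat \<Rightarrow> 'e \<Rightarrow> 'v) \<Rightarrow> (nat \<Rightarrow> 'e \<Rightarrow> 'v) \<Rightarrow> 'v \<Rightarrow> bool"
where
  "acts_minimally V E s r v0 \<longleftrightarrow>
     (\<forall>x\<in>pathspace V E s r v0.
        pathtop V E s r v0 closure_of {g x | g. g \<in> fullgroup_set V E s r v0}
          = pathspace V E s r v0)"

text \<open>Simple non-trivial group (possibly infinite; the library locale simple_group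
  requires finite order > 1, so it is not used).\<close>

definition simple_nontrivial_group :: "('a, 'b) monoid_scheme \<Rightarrow> bool" where
  "simple_nontrivial_group G \<longleftrightarrow>
     group G \<and> carrier G \<noteq> {\<one>\<^bsub>G\<^esub>} \<and>
     (\<forall>H. H \<lhd> G \<longrightarrow> H = {\<one>\<^bsub>G\<^esub>} \<or> H = carrier G)"

text \<open>Finite paths of B from vertex v at level a to vertex w at level b (a < b);
  these are the edges of the telescoped diagram between the corresponding levels.\<close>

definition fin_paths ::
  "(nat \<Rightarrow> 'v set) \<Rightarrow> (nat \<Rightarrow> 'e set) \<Rightarrow> (nat \<Rightarrow> 'e \<Rightarrow> 'v) \<Rightarrow> (nat \<Rightarrow> 'e \<Rightarrow> 'v)
    \<Rightarrow> nat \<Rightarrow> nat \<Rightarrow> 'v \<Rightarrow> 'v \<Rightarrow> 'e list set"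
where
  "fin_paths V E s r a b v w =
     {es. length es = b - a \<and>
          (\<forall>i<b - a. es ! i \<in> E (a + i + 1)) \<and>
          (\<forall>i. Suc i < b - a \<longrightarrow> r (a + i + 1) (es ! i) = s (a + i + 2) (es ! Suc i)) \<and>
          s (a + 1) (es ! 0) = v \<and> r b (es ! (b - a - 1)) = w}"

end

theory Submission imports Defs "HOL-Combinatorics.Permutations" begin

locale brat =
  fixes V :: "nat \<Rightarrow> 'v set" and E :: "nat \<Rightarrow> 'e set"
    and s r :: "nat \<Rightarrow> 'e \<Rightarrow> 'v" and v0 :: 'v
  assumes B: "bratteli V E s r v0"
begin

abbreviation "X \<equiv> pathspace V E s r v0"
abbreviation "fp \<equiv> fin_paths V E s r"

lemma V0: "V 0 = {v0}" using B by (simp add: bratteli_def)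
lemma finV: "finite (V n)" using B by (simp add: bratteli_def)
lemma finE: "finite (E (Suc n))" using B by (simp add: bratteli_def)
lemma sE: "e \<in> E (Suc n) \<Longrightarrow> s (Suc n) e \<in> V n" using B by (simp add: bratteli_def)
lemma rE: "e \<in> E (Suc n) \<Longrightarrow> r (Suc n) e \<in> V (Suc n)" using B by (simp add: bratteli_def)
lemma outE: "v \<in> V n \<Longrightarrow> \<exists>e\<in>E (Suc n). s (Suc n) e = v" using B by (simp add: bratteli_def)
lemma inE: "v \<in> V (Suc n) \<Longrightarrow> \<exists>e\<in>E (Suc n). r (Suc n) e = v" using B by (simp add: bratteli_def)

lemma V_ne: "V n \<noteq> {}"
proof (induction n)
  case 0 then show ?case by (simp add: V0)
next
  case (Suc n)
  then obtain v where "v \<in> V n" by auto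
  then obtain e where "e \<in> E (Suc n)" by (meson outE)
  then show ?case using rE by blast
qed

lemma fp_finite: "finite (fp a b v w)"
proof -
  have "fp a b v w \<subseteq> {es. set es \<subseteq> (\<Union>i\<in>{a+1..b}. E i) \<and> length es = b - a}"
  proof
    fix es assume es: "es \<in> fp a b v w"
    have "set es \<subseteq> (\<Union>i\<in>{a+1..b}. E i)"
    proof
      fix e assume "e \<in> set es"
      then obtain i where "i < length es" "es ! i = e" by (meson in_set_conv_nth)
      with es show "e \<in> (\<Union>i\<in>{a+1..b}. E i)"
        unfolding fin_paths_def by (intro UN_I[of "a+i+1"]) auto
    qed
    with es show "es \<in> {es. set es \<subseteq> (\<Union>i\<in>{a+1..b}. E i) \<and> length es = b - a}"
      unfolding fin_paths_def by auto
  qed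
  moreover have "finite (\<Union>i\<in>{a+1..b}. E i)"
    using finE by (intro finite_UN_I) (auto simp: Suc_le_D dest!: Suc_le_D)
  ultimately show ?thesis using finite_subset finite_lists_length_eq by blast
qed

lemma fp_append:
  assumes "a < b" "b < c" "p \<in> fp a b v u" "q \<in> fp b c u w"
  shows "p @ q \<in> fp a c v w"
proof -
  have lp: "length p = b - a" and lq: "length q = c - b"
    using assms unfolding fin_paths_def by auto
  have E1: "\<forall>i<b-a. p!i \<in> E (a+i+1)" and E2: "\<forall>i<c-b. q!i \<in> E (b+i+1)"
    and C1: "\<forall>i. Suc i < b-a \<longrightarrow> r (a+i+1) (p!i) = s (a+i+2) (p!Suc i)"
    and C2: "\<forall>i. Suc i < c-b \<longrightarrow> r (b+i+1) (q!i) = s (b+i+2) (q!Suc i)"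
    and S1: "s (a+1) (p!0) = v" and R1: "r b (p!(b-a-1)) = u"
    and S2: "s (b+1) (q!0) = u" and R2: "r c (q!(c-b-1)) = w"
    using assms unfolding fin_paths_def by auto
  have "\<forall>i<c-a. (p@q)!i \<in> E (a+i+1)"
  proof (intro allI impI)
    fix i assume "i < c - a"
    show "(p@q)!i \<in> E (a+i+1)"
    proof (cases "i < b - a")
      case True then show ?thesis using E1 lp by (simp add: nth_append)
    next
      case False
      then have "i - (b-a) < c - b" using \<open>i < c-a\<close> assms by auto
      then have "q!(i-(b-a)) \<in> E (b + (i-(b-a)) + 1)" using E2 by blast
      moreover have "b + (i-(b-a)) + 1 = a+i+1" using False assms by auto
      ultimately show ?thesis using False lp by (simp add: nth_append ac_simps)
    qed
  qed
  moreover have "\<forall>i. Suc i < c-a \<longrightarrow> r (a+i+1) ((p@q)!i) = s (a+i+2) ((p@q)!Suc i)"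
  proof (intro allI impI)
    fix i assume i: "Suc i < c - a"
    consider "Suc i < b - a" | "Suc i = b - a" | "Suc i > b - a" by linarith
    then show "r (a+i+1) ((p@q)!i) = s (a+i+2) ((p@q)!Suc i)"
    proof cases
      case 1 then show ?thesis using C1 lp by (simp add: nth_append)
    next
      case 2
      then have "a+i+1 = b" "a+i+2 = b+1" "i = b-a-1" using assms by auto
      then show ?thesis using 2 R1 S2 lp by (simp add: nth_append)
    next
      case 3
      define j where "j = i - (b-a)"
      have ij: "i = j + (b-a)" "Suc j < c - b" using 3 i assms by (auto simp: j_def)
      have "r (b+j+1) (q!j) = s (b+j+2) (q!Suc j)" using C2 ij by blast
      moreover have "b+j+1 = a+i+1" "b+j+2 = a+i+2" using ij assms by auto
      ultimately show ?thesis using 3 lp ij by (simp add: nth_append ac_simps)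
    qed
  qed
  moreover have "s (a+1) ((p@q)!0) = v" using S1 lp assms by (simp add: nth_append)
  moreover have "r c ((p@q)!(c-a-1)) = w"
  proof -
    have "c-a-1 = (c-b-1) + (b-a)" "\<not> c-a-1 < b-a" using assms by auto
    then show ?thesis using R2 lp by (simp add: nth_append)
  qed
  ultimately show ?thesis using lp lq assms unfolding fin_paths_def by auto
qed

lemma fp_split:
  assumes "a < b" "b < c" "q \<in> fp a c v w"
  defines "u \<equiv> r b (q!(b-a-1))"
  shows "take (b-a) q \<in> fp a b v u" "drop (b-a) q \<in> fp b c u w" "u \<in> V b"
proof -
  have lq: "length q = c - a" and E1: "\<forall>i<c-a. q!i \<in> E (a+i+1)"
    and C1: "\<forall>i. Suc i < c-a \<longrightarrow> r (a+i+1) (q!i) = s (a+i+2) (q!Suc i)"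
    and S1: "s (a+1) (q!0) = v" and R1: "r c (q!(c-a-1)) = w"
    using assms unfolding fin_paths_def by auto
  show "take (b-a) q \<in> fp a b v u"
    unfolding fin_paths_def u_def using lq E1 C1 S1 assms by auto
  show "u \<in> V b"
  proof -
    have "q!(b-a-1) \<in> E (Suc (b - 1))" using E1[rule_format, of "b-a-1"] assms
      by (simp add: Suc_diff_Suc)
    then have "r (Suc (b-1)) (q!(b-a-1)) \<in> V (Suc (b-1))" by (rule rE)
    then show ?thesis using assms by (simp add: u_def)
  qed
  show "drop (b-a) q \<in> fp b c u w"
    unfolding fin_paths_def
  proof (intro CollectI conjI allI impI)
    show "length (drop (b - a) q) = c - b" using lq assms by auto
    fix i assume "i < c - b"
    then show "drop (b - a) q ! i \<in> E (b + i + 1)"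
      using E1[rule_format, of "b-a+i"] assms lq by (simp add: add.commute)
  next
    fix i assume "Suc i < c - b"
    then show "r (b + i + 1) (drop (b - a) q ! i) = s (b + i + 2) (drop (b - a) q ! Suc i)"
      using C1[rule_format, of "b-a+i"] assms lq by (simp add: add.commute)
  next
    have "Suc (b-a-1) < c - a" "a + (b-a-1) + 1 = b" "a + (b-a-1) + 2 = b+1" "Suc (b-a-1) = b-a" using assms by auto
    then show "s (b + 1) (drop (b - a) q ! 0) = u"
      using C1[rule_format, of "b-a-1"] assms lq by (simp add: u_def)
  next
    have "b - a + (c - b - 1) = c - a - 1" using assms by auto
    then show "r c (drop (b - a) q ! (c - b - 1)) = w" using R1 assms lq by simp
  qed
qed

lemma fp_len: "q \<in> fp a b v w \<Longrightarrow> length q = b - a" unfolding fin_paths_def by auto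

lemma fp_decomp:
  assumes "a < b" "b < c"
  shows "fp a c v w = (\<lambda>(u,p,q). p @ q) ` (SIGMA u:V b. fp a b v u \<times> fp b c u w)"
proof
  show "fp a c v w \<subseteq> (\<lambda>(u,p,q). p @ q) ` (SIGMA u:V b. fp a b v u \<times> fp b c u w)"
  proof
    fix q assume q: "q \<in> fp a c v w"
    let ?u = "r b (q!(b-a-1))"
    have "(?u, take (b-a) q, drop (b-a) q) \<in> (SIGMA u:V b. fp a b v u \<times> fp b c u w)"
      using fp_split[OF assms q] by auto
    then show "q \<in> (\<lambda>(u,p,q). p @ q) ` (SIGMA u:V b. fp a b v u \<times> fp b c u w)"
      by (intro image_eqI[of _ _ "(?u, take (b-a) q, drop (b-a) q)"]) auto
  qed
next
  show "(\<lambda>(u,p,q). p @ q) ` (SIGMA u:V b. fp a b v u \<times> fp b c u w) \<subseteq> fp a c v w"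
    using fp_append[OF assms] by auto
qed

lemma fp_card:
  assumes "a < b" "b < c"
  shows "card (fp a c v w) = (\<Sum>u\<in>V b. card (fp a b v u) * card (fp b c u w))"
proof -
  have inj: "inj_on (\<lambda>(u,p,q). p @ q) (SIGMA u:V b. fp a b v u \<times> fp b c u w)"
  proof (rule inj_onI, clarsimp)
    fix u p q u' p' q'
    assume p: "p \<in> fp a b v u" and p': "p' \<in> fp a b v u'" and "q \<in> fp b c u w" "q' \<in> fp b c u' w"
      and eq: "p @ q = p' @ q'"
    have "length p = length p'" using p p' fp_len by metis
    then have pp: "p = p'" "q = q'" using eq by auto
    have "u = r b (p!(b-a-1))" "u' = r b (p'!(b-a-1))" using p p' unfolding fin_paths_def by auto
    with pp show "u = u' \<and> p = p' \<and> q = q'" by simp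
  qed
  have "card (fp a c v w) = card (SIGMA u:V b. fp a b v u \<times> fp b c u w)"
    unfolding fp_decomp[OF assms] using card_image[OF inj] .
  also have "\<dots> = (\<Sum>u\<in>V b. card (fp a b v u \<times> fp b c u w))"
    using finV fp_finite by (intro card_SigmaI) auto
  also have "\<dots> = (\<Sum>u\<in>V b. card (fp a b v u) * card (fp b c u w))"
    by (simp add: card_cartesian_product)
  finally show ?thesis .
qed

lemma fp_trans:
  assumes "a < b" "b < c" "fp a b v u \<noteq> {}" "fp b c u w \<noteq> {}"
  shows "fp a c v w \<noteq> {}"
  using fp_append[OF assms(1,2)] assms(3,4) by blast

lemma fp_mid:
  assumes "a < b" "b < c" "fp a c v w \<noteq> {}"
  shows "\<exists>u\<in>V b. fp a b v u \<noteq> {} \<and> fp b c u w \<noteq> {}"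
  using fp_split[OF assms(1,2)] assms(3) by blast

lemma fp_step_iff: "fp c (Suc c) u w \<noteq> {} \<longleftrightarrow> (\<exists>e\<in>E (Suc c). s (Suc c) e = u \<and> r (Suc c) e = w)"
proof
  assume "fp c (Suc c) u w \<noteq> {}"
  then obtain q where "q \<in> fp c (Suc c) u w" by auto
  then show "\<exists>e\<in>E (Suc c). s (Suc c) e = u \<and> r (Suc c) e = w"
    unfolding fin_paths_def by (intro bexI[of _ "q!0"]) auto
next
  assume "\<exists>e\<in>E (Suc c). s (Suc c) e = u \<and> r (Suc c) e = w"
  then obtain e where "e\<in>E (Suc c)" "s (Suc c) e = u" "r (Suc c) e = w" by auto
  then have "[e] \<in> fp c (Suc c) u w" unfolding fin_paths_def by auto
  then show "fp c (Suc c) u w \<noteq> {}" by auto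
qed

lemma backward: "w \<in> V b \<Longrightarrow> a < b \<Longrightarrow> \<exists>u\<in>V a. fp a b u w \<noteq> {}"
proof (induction b arbitrary: w)
  case 0 then show ?case by simp
next
  case (Suc b)
  then obtain e where e: "e \<in> E (Suc b)" "r (Suc b) e = w" using inE by blast
  let ?u = "s (Suc b) e"
  have u: "?u \<in> V b" "fp b (Suc b) ?u w \<noteq> {}" using e sE fp_step_iff by blast+
  show ?case
  proof (cases "a = b")
    case True then show ?thesis using u by blast
  next
    case False
    then have "a < b" using Suc by auto
    then obtain u' where "u' \<in> V a" "fp a b u' ?u \<noteq> {}" using Suc.IH u by blast
    then show ?thesis using fp_trans[OF \<open>a<b\<close> _ _ u(2)] by blast
  qed
qed

lemma from_v0: "w \<in> V b \<Longrightarrow> 0 < b \<Longrightarrow> fp 0 b v0 w \<noteq> {}"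
  using backward[of w b 0] V0 by auto

lemma forward: "u \<in> V a \<Longrightarrow> a < b \<Longrightarrow> \<exists>w\<in>V b. fp a b u w \<noteq> {}"
proof (induction b)
  case 0 then show ?case by simp
next
  case (Suc b)
  show ?case
  proof (cases "a = b")
    case True
    obtain e where "e \<in> E (Suc a)" "s (Suc a) e = u" using outE Suc by blast
    then show ?thesis using True fp_step_iff rE by blast
  next
    case False
    then have "a < b" using Suc by auto
    then obtain w where w: "w \<in> V b" "fp a b u w \<noteq> {}" using Suc by blast
    obtain e where "e \<in> E (Suc b)" "s (Suc b) e = w" using outE w by blast
    then have "r (Suc b) e \<in> V (Suc b)" "fp b (Suc b) w (r (Suc b) e) \<noteq> {}" using fp_step_iff rE by blast+
    then show ?thesis using fp_trans[OF \<open>a<b\<close> _ w(2)] by blast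
  qed
qed

definition seg :: "nat \<Rightarrow> nat \<Rightarrow> (nat \<Rightarrow> 'e) \<Rightarrow> 'e list" where
  "seg a b x = map (\<lambda>i. x (a+i)) [0..<b-a]"
definition vert :: "nat \<Rightarrow> (nat \<Rightarrow> 'e) \<Rightarrow> 'v" where
  "vert k x = s (Suc k) (x k)"

lemma X_E: "x \<in> X \<Longrightarrow> x k \<in> E (Suc k)" unfolding pathspace_def by auto
lemma X_v0: "x \<in> X \<Longrightarrow> vert 0 x = v0" unfolding pathspace_def vert_def by auto
lemma X_r: "x \<in> X \<Longrightarrow> r (Suc k) (x k) = vert (Suc k) x" unfolding pathspace_def vert_def by auto
lemma X_vert: "x \<in> X \<Longrightarrow> vert k x \<in> V k" unfolding vert_def using X_E sE by auto

lemma seg_eq: "seg a b x = seg a b y \<longleftrightarrow> (\<forall>i. a \<le> i \<and> i < b \<longrightarrow> x i = y i)"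
proof
  assume "seg a b x = seg a b y"
  then have "\<forall>j<b-a. x (a+j) = y (a+j)" unfolding seg_def by (simp add: map_eq_conv)
  then show "\<forall>i. a \<le> i \<and> i < b \<longrightarrow> x i = y i"
    by (metis add_diff_inverse_nat diff_less_mono not_less)
qed (auto simp: seg_def)

lemma seg_fp:
  assumes "x \<in> X" "a < b"
  shows "seg a b x \<in> fp a b (vert a x) (vert b x)"
proof -
  have "b - a - 1 + a = b - 1" "Suc (b-1) = b" using assms by auto
  moreover have "r b (x (b - Suc 0)) = s (Suc b) (x b)"
    using X_r[OF assms(1), of "b-1"] \<open>Suc (b-1) = b\<close> by (simp add: vert_def)
  ultimately show ?thesis unfolding fin_paths_def seg_def using assms X_E X_r
    by (auto simp: vert_def ac_simps)
qed

primrec nv :: "(nat \<Rightarrow> 'v \<Rightarrow> 'e) \<Rightarrow> nat \<Rightarrow> 'v \<Rightarrow> nat \<Rightarrow> 'v" where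
  "nv pk c u 0 = u"
| "nv pk c u (Suc j) = r (Suc (c+j)) (pk (c+j) (nv pk c u j))"

lemma inf_path:
  assumes step: "\<And>c u. P c u \<Longrightarrow> \<exists>e\<in>E (Suc c). s (Suc c) e = u \<and> P (Suc c) (r (Suc c) e)"
    and P0: "P c u"
  shows "\<exists>y. s (Suc c) (y c) = u \<and> (\<forall>k\<ge>c. y k \<in> E (Suc k) \<and> P (Suc k) (r (Suc k) (y k))
              \<and> r (Suc k) (y k) = s (Suc (Suc k)) (y (Suc k)))"
proof -
  define pk where "pk l w = (SOME e. e \<in> E (Suc l) \<and> s (Suc l) e = w \<and> P (Suc l) (r (Suc l) e))" for l w
  have pk: "pk l w \<in> E (Suc l) \<and> s (Suc l) (pk l w) = w \<and> P (Suc l) (r (Suc l) (pk l w))" if "P l w" for l w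
    unfolding pk_def using step[OF that] by (rule someI2_bex) auto
  have Pj: "P (c+j) (nv pk c u j)" for j
    by (induction j) (use P0 pk in auto)
  define y where "y k = pk k (nv pk c u (k - c))" for k
  have "s (Suc c) (y c) = u" unfolding y_def using pk[OF Pj[of 0]] by simp
  moreover have "y k \<in> E (Suc k) \<and> P (Suc k) (r (Suc k) (y k))
              \<and> r (Suc k) (y k) = s (Suc (Suc k)) (y (Suc k))" if "k \<ge> c" for k
  proof -
    have ck: "c + (k - c) = k" "Suc k - c = Suc (k-c)" using that by auto
    have a: "P k (nv pk c u (k-c))" using Pj[of "k-c"] ck by simp
    have b: "P (Suc k) (nv pk c u (Suc (k-c)))" using Pj[of "Suc(k-c)"] ck by simp
    show ?thesis unfolding y_def using pk[OF a] pk[OF b] ck by simp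
  qed
  ultimately show ?thesis by blast
qed

lemma extend:
  assumes "q \<in> fp 0 m v0 w" "0 < m"
  shows "\<exists>x\<in>X. seg 0 m x = q \<and> vert m x = w"
proof -
  have lq: "length q = m" using fp_len assms by auto
  have wV: "w \<in> V m"
  proof -
    have "\<forall>i<m. q!i \<in> E (0+i+1)" "r m (q!(m-1)) = w" using assms unfolding fin_paths_def by auto
    then have "q!(m-1) \<in> E (Suc (m-1))" "r m (q!(m-1)) = w" using assms
      by (metis Suc_eq_plus1 add_0 diff_less zero_less_one, simp)
    then show ?thesis using rE assms by (metis Suc_diff_1)
  qed
  obtain y where y: "s (Suc m) (y m) = w" "\<forall>k\<ge>m. y k \<in> E (Suc k)
     \<and> r (Suc k) (y k) = s (Suc (Suc k)) (y (Suc k))"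
    using inf_path[of "\<lambda>c u. u \<in> V c" m w] outE rE wV by blast
  define x where "x k = (if k < m then q!k else y k)" for k
  have "x \<in> X" unfolding pathspace_def
  proof (intro CollectI conjI allI)
    fix k show "x k \<in> E (Suc k)" using assms y unfolding x_def fin_paths_def by auto
  next
    show "s 1 (x 0) = v0" using assms unfolding x_def fin_paths_def by auto
  next
    fix k
    consider "Suc k < m" | "Suc k = m" | "Suc k > m" by linarith
    then show "r (Suc k) (x k) = s (Suc (Suc k)) (x (Suc k))"
    proof cases
      case 1 then show ?thesis using assms unfolding x_def fin_paths_def by auto
    next
      case 2 then show ?thesis using assms y unfolding x_def fin_paths_def by auto
    next
      case 3 then show ?thesis using y unfolding x_def by auto
    qed
  qed
  moreover have "seg 0 m x = q" unfolding seg_def x_def using lq by (simp add: list_eq_iff_nth_eq)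
  moreover have "vert m x = w" unfolding vert_def x_def using y by simp
  ultimately show ?thesis by blast
qed

lemma X_ne: "X \<noteq> {}"
proof -
  obtain y where y: "s (Suc 0) (y 0) = v0" "\<forall>k\<ge>0. y k \<in> E (Suc k)
     \<and> r (Suc k) (y k) = s (Suc (Suc k)) (y (Suc k))"
    using inf_path[of "\<lambda>c u. u \<in> V c" 0 v0] outE rE V0 by blast
  then have "y \<in> X" unfolding pathspace_def by auto
  then show ?thesis by auto
qed

lemma through: "v \<in> V a \<Longrightarrow> \<exists>x\<in>X. vert a x = v"
proof (cases "a = 0")
  case True
  assume "v \<in> V a"
  then show ?thesis using True X_ne X_v0 V0 by auto
next
  case False
  assume "v \<in> V a"
  then obtain q where "q \<in> fp 0 a v0 v" using from_v0 False by blast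
  then show ?thesis using extend False by blast
qed

end

context brat begin

abbreviation "T \<equiv> pathtop V E s r v0"
abbreviation "GG \<equiv> Gn V E s r v0"

lemma X_sub: "X \<subseteq> topspace (product_topology (\<lambda>k. discrete_topology (E (Suc k))) UNIV)"
  using X_E by (auto simp: PiE_iff)

lemma topT: "topspace T = X"
  unfolding pathtop_def using X_sub by auto

lemma open_coord: "openin T {x\<in>X. x k \<in> A}"
proof -
  have "openin (product_topology (\<lambda>k. discrete_topology (E (Suc k))) UNIV)
     {x \<in> topspace (product_topology (\<lambda>k. discrete_topology (E (Suc k))) UNIV). x k \<in> A \<inter> E (Suc k)}"
    by (rule openin_continuous_map_preimage[OF continuous_map_product_projection]) auto
  then have "openin T ({x \<in> topspace (product_topology (\<lambda>k. discrete_topology (E (Suc k))) UNIV). x k \<in> A \<inter> E (Suc k)} \<inter> X)"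
    unfolding pathtop_def openin_subtopology by blast
  moreover have "{x \<in> topspace (product_topology (\<lambda>k. discrete_topology (E (Suc k))) UNIV). x k \<in> A \<inter> E (Suc k)} \<inter> X
     = {x\<in>X. x k \<in> A}" using X_sub X_E by auto
  ultimately show ?thesis by simp
qed

definition cyl :: "nat \<Rightarrow> (nat \<Rightarrow> 'e) \<Rightarrow> (nat \<Rightarrow> 'e) set" where
  "cyl n x = {y\<in>X. \<forall>j<n. y j = x j}"

lemma open_cyl: "openin T (cyl n x)"
proof (induction n)
  case 0
  have "cyl 0 x = {y\<in>X. y 0 \<in> UNIV}" by (auto simp: cyl_def)
  then show ?case by (simp only: open_coord)
next
  case (Suc n)
  have "cyl (Suc n) x = cyl n x \<inter> {y\<in>X. y n \<in> {x n}}" by (auto simp: cyl_def less_Suc_eq)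
  then show ?case using Suc open_coord by (simp only: openin_Int)
qed

lemma cont_local:
  assumes into: "\<And>x. x \<in> X \<Longrightarrow> f x \<in> X"
    and loc: "\<And>k. \<exists>n. \<forall>x\<in>X. \<forall>y\<in>X. (\<forall>j<n. x j = y j) \<longrightarrow> f x k = f y k"
  shows "continuous_map T T f"
proof -
  have "continuous_map T (discrete_topology (E (Suc k))) (\<lambda>x. f x k)" for k
  proof -
    obtain n where n: "\<forall>x\<in>X. \<forall>y\<in>X. (\<forall>j<n. x j = y j) \<longrightarrow> f x k = f y k" using loc by blast
    show ?thesis unfolding continuous_map topT
    proof (intro conjI allI impI)
      show "(\<lambda>x. f x k) ` X \<subseteq> topspace (discrete_topology (E (Suc k)))"
        using into X_E by auto
      fix U
      have "{x \<in> X. f x k \<in> U} = \<Union>{cyl n x |x. x \<in> X \<and> f x k \<in> U}"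
      proof
        show "{x \<in> X. f x k \<in> U} \<subseteq> \<Union>{cyl n x |x. x \<in> X \<and> f x k \<in> U}"
          by (auto simp: cyl_def)
        show "\<Union>{cyl n x |x. x \<in> X \<and> f x k \<in> U} \<subseteq> {x \<in> X. f x k \<in> U}"
        proof clarify
          fix y x assume "y \<in> cyl n x" "x \<in> X" "f x k \<in> U"
          then have "y \<in> X" "\<forall>j<n. y j = x j" by (auto simp: cyl_def)
          then have "f y k = f x k" using n \<open>x \<in> X\<close> by blast
          then show "y \<in> X \<and> f y k \<in> U" using \<open>y \<in> X\<close> \<open>f x k \<in> U\<close> by simp
        qed
      qed
      then show "openin T {x \<in> X. f x k \<in> U}" using open_cyl by auto
    qed
  qed
  then have "continuous_map T (product_topology (\<lambda>k. discrete_topology (E (Suc k))) UNIV) f"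
    by (simp add: continuous_map_componentwise_UNIV)
  then show ?thesis unfolding pathtop_def continuous_map_in_subtopology
    using into topT unfolding pathtop_def by auto
qed

lemma Gn_X: "g \<in> GG n \<Longrightarrow> x \<in> X \<Longrightarrow> g x \<in> X"
  unfolding Gn_def using homeomorphic_imp_surjective_map topT by blast

lemma Gn_off: "g \<in> GG n \<Longrightarrow> x \<notin> X \<Longrightarrow> g x = x"
  unfolding Gn_def by blast

lemma Gn_tail: "g \<in> GG n \<Longrightarrow> x \<in> X \<Longrightarrow> n \<le> k \<Longrightarrow> g x k = x k"
  unfolding Gn_def by blast

lemma Gn_loc: "g \<in> GG n \<Longrightarrow> x \<in> X \<Longrightarrow> y \<in> X \<Longrightarrow> \<forall>k<n. x k = y k \<Longrightarrow> k < n \<Longrightarrow> g x k = g y k"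
  unfolding Gn_def by blast

lemma Gn_mono: assumes "g \<in> GG n" "n \<le> m" shows "g \<in> GG m"
proof -
  have "\<forall>x\<in>X. \<forall>y\<in>X. (\<forall>k<m. x k = y k) \<longrightarrow> (\<forall>k<m. g x k = g y k)"
  proof (intro ballI impI allI)
    fix x y k assume xy: "x\<in>X" "y\<in>X" "\<forall>k<m. x k = y k" "k < m"
    show "g x k = g y k"
    proof (cases "k < n")
      case True then show ?thesis using Gn_loc[OF assms(1) xy(1,2)] xy assms(2) by auto
    next
      case False
      then have "g x k = x k" "g y k = y k" using Gn_tail[OF assms(1) xy(1)] Gn_tail[OF assms(1) xy(2)] by auto
      then show ?thesis using xy(3,4) by simp
    qed
  qed
  moreover have "\<forall>x\<in>X. \<forall>k\<ge>m. g x k = x k" using Gn_tail[OF assms(1)] assms(2) by simp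
  ultimately show ?thesis using assms(1) unfolding Gn_def by blast
qed

lemma Gn_seg: "g \<in> GG m \<Longrightarrow> x \<in> X \<Longrightarrow> y \<in> X \<Longrightarrow> seg 0 m x = seg 0 m y \<Longrightarrow> seg 0 m (g x) = seg 0 m (g y)"
  using Gn_loc[of g m x y] by (auto simp: seg_eq)

lemma Gn_vert: "g \<in> GG n \<Longrightarrow> x \<in> X \<Longrightarrow> n \<le> k \<Longrightarrow> vert k (g x) = vert k x"
  unfolding vert_def by (simp add: Gn_tail)

lemma carrier_G: "carrier (fullgroup V E s r v0) = (\<Union>n. GG n)"
  by (simp add: fullgroup_def fullgroup_set_def)
lemma mult_G: "mult (fullgroup V E s r v0) f g = f \<circ> g"
  by (simp add: fullgroup_def)
lemma one_G: "one (fullgroup V E s r v0) = id"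
  by (simp add: fullgroup_def)

end

context brat begin

lemma minimal_conn:
  assumes min: "acts_minimally V E s r v0" and vV: "v \<in> V a"
  shows "\<exists>b>a. \<forall>w\<in>V b. fp a b v w \<noteq> {}"
proof (rule ccontr)
  assume "\<not> ?thesis"
  then have bad: "\<forall>b>a. \<exists>w\<in>V b. fp a b v w = {}" by blast
  define rch where "rch c d u w \<longleftrightarrow> (c = d \<and> u = w) \<or> (c < d \<and> fp c d u w \<noteq> {})" for c d u w
  define good where "good c u \<longleftrightarrow> u \<in> V c \<and> (\<forall>d\<ge>c. \<exists>w\<in>V d. rch c d u w \<and> (a < d \<longrightarrow> \<not> rch a d v w))" for c u
  have rch_mid: "\<exists>w'\<in>V e. rch c e u w' \<and> rch e d w' w" if h: "rch c d u w" "c \<le> e" "e \<le> d" "u \<in> V c" "w \<in> V d" for c d e u w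
  proof -
    consider "c = e" | "e = d" | "c < e \<and> e < d" using h(2,3) by linarith
    then show ?thesis
    proof cases
      case 1 then show ?thesis using h by (auto simp: rch_def)
    next
      case 2 then show ?thesis using h by (auto simp: rch_def)
    next
      case 3 then have "c < d" by auto
      then have "fp c d u w \<noteq> {}" using h by (auto simp: rch_def)
      then show ?thesis using fp_mid[of c e d u w] 3 by (auto simp: rch_def)
    qed
  qed
  have rch_trans: "rch c d u w" if "rch c e u w'" "rch e d w' w" for c d e u w w'
    using that fp_trans[of c e d u w' w] by (auto simp: rch_def)
  have good0: "good 0 v0"
    unfolding good_def
  proof (intro conjI allI impI)
    show "v0 \<in> V 0" by (simp add: V0)
    fix d :: nat
    show "\<exists>w\<in>V d. rch 0 d v0 w \<and> (a < d \<longrightarrow> \<not> rch a d v w)"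
    proof (cases "a < d")
      case True
      then obtain w where "w \<in> V d" "fp a d v w = {}" using bad by blast
      moreover have "rch 0 d v0 w" using from_v0[OF \<open>w \<in> V d\<close>] True by (auto simp: rch_def)
      ultimately show ?thesis using True by (auto simp: rch_def)
    next
      case False
      obtain w where "w \<in> V d" using V_ne by blast
      moreover have "rch 0 d v0 w" using from_v0[OF \<open>w \<in> V d\<close>] V0 \<open>w \<in> V d\<close>
        by (cases "d = 0") (auto simp: rch_def)
      ultimately show ?thesis using False by blast
    qed
  qed
  have step: "\<exists>e\<in>E (Suc c). s (Suc c) e = u \<and> good (Suc c) (r (Suc c) e)" if gu: "good c u" for c u
  proof (rule ccontr)
    assume nope: "\<not> ?thesis"
    define Oe where "Oe = {e\<in>E (Suc c). s (Suc c) e = u}"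
    have finO: "finite Oe" using finE by (auto simp: Oe_def)
    have uV: "u \<in> V c" using gu by (simp add: good_def)
    have fail: "\<exists>d\<ge>Suc c. \<forall>w\<in>V d. rch (Suc c) d (r (Suc c) e) w \<longrightarrow> a < d \<and> rch a d v w" if "e \<in> Oe" for e
    proof -
      have "\<not> good (Suc c) (r (Suc c) e)" using nope that by (auto simp: Oe_def)
      moreover have "r (Suc c) e \<in> V (Suc c)" using that rE by (auto simp: Oe_def)
      ultimately show ?thesis unfolding good_def by blast
    qed
    have fail_mono: "\<forall>w\<in>V d'. rch (Suc c) d' (r (Suc c) e) w \<longrightarrow> a < d' \<and> rch a d' v w"
      if eO: "e \<in> Oe" and dd: "d \<ge> Suc c" "d \<le> d'" and F: "\<forall>w\<in>V d. rch (Suc c) d (r (Suc c) e) w \<longrightarrow> a < d \<and> rch a d v w"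
      for e d d'
    proof (intro ballI impI)
      fix w assume w: "w \<in> V d'" "rch (Suc c) d' (r (Suc c) e) w"
      have reV: "r (Suc c) e \<in> V (Suc c)" using eO rE by (auto simp: Oe_def)
      obtain w' where w': "w' \<in> V d" "rch (Suc c) d (r (Suc c) e) w'" "rch d d' w' w"
        using rch_mid[OF w(2) dd(1) dd(2) reV w(1)] by blast
      then have "a < d \<and> rch a d v w'" using F by blast
      then show "a < d' \<and> rch a d' v w" using rch_trans w' dd by auto
    qed
    obtain D where D: "\<forall>e\<in>Oe. \<exists>d. Suc c \<le> d \<and> d \<le> D \<and> (\<forall>w\<in>V d. rch (Suc c) d (r (Suc c) e) w \<longrightarrow> a < d \<and> rch a d v w)"
      and DSuc: "D \<ge> Suc c"
    proof -
      obtain df where df: "\<forall>e\<in>Oe. df e \<ge> Suc c \<and> (\<forall>w\<in>V (df e). rch (Suc c) (df e) (r (Suc c) e) w \<longrightarrow> a < df e \<and> rch a (df e) v w)"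
        using fail by metis
      let ?D = "max (Suc c) (Max (df ` Oe))"
      have "\<forall>e\<in>Oe. df e \<le> ?D" using finO by (simp add: le_max_iff_disj)
      show ?thesis
      proof (rule that[of ?D])
        show "\<forall>e\<in>Oe. \<exists>d. Suc c \<le> d \<and> d \<le> ?D \<and> (\<forall>w\<in>V d. rch (Suc c) d (r (Suc c) e) w \<longrightarrow> a < d \<and> rch a d v w)"
        proof
          fix e assume "e \<in> Oe"
          then show "\<exists>d. Suc c \<le> d \<and> d \<le> ?D \<and> (\<forall>w\<in>V d. rch (Suc c) d (r (Suc c) e) w \<longrightarrow> a < d \<and> rch a d v w)"
            using df \<open>\<forall>e\<in>Oe. df e \<le> ?D\<close> by (intro exI[of _ "df e"]) blast
        qed
      qed simp
    qed
    have Dall: "\<forall>e\<in>Oe. \<forall>w\<in>V D. rch (Suc c) D (r (Suc c) e) w \<longrightarrow> a < D \<and> rch a D v w"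
    proof
      fix e assume e: "e \<in> Oe"
      then obtain d where "Suc c \<le> d" "d \<le> D" "\<forall>w\<in>V d. rch (Suc c) d (r (Suc c) e) w \<longrightarrow> a < d \<and> rch a d v w"
        using D by blast
      then show "\<forall>w\<in>V D. rch (Suc c) D (r (Suc c) e) w \<longrightarrow> a < D \<and> rch a D v w"
        using fail_mono[OF e] by blast
    qed
    obtain w where w: "w \<in> V D" "rch c D u w" "a < D \<longrightarrow> \<not> rch a D v w"
      using gu DSuc unfolding good_def by (meson Suc_leD)
    obtain w1 where w1: "w1 \<in> V (Suc c)" "rch c (Suc c) u w1" "rch (Suc c) D w1 w"
      using rch_mid[OF w(2) _ DSuc uV w(1)] by auto
    then obtain e where "e \<in> E (Suc c)" "s (Suc c) e = u" "r (Suc c) e = w1"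
      using fp_step_iff by (auto simp: rch_def)
    then have "e \<in> Oe" by (auto simp: Oe_def)
    then show False using Dall w w1 \<open>r (Suc c) e = w1\<close> by blast
  qed
  obtain y where y: "s (Suc 0) (y 0) = v0" "\<forall>k\<ge>0. y k \<in> E (Suc k) \<and> good (Suc k) (r (Suc k) (y k))
      \<and> r (Suc k) (y k) = s (Suc (Suc k)) (y (Suc k))"
    using inf_path[of good 0 v0, OF step good0] by blast
  have yX: "y \<in> X" using y unfolding pathspace_def by auto
  have ybad: "\<not> rch a d v (vert d y)" if ad: "a < d" for d
  proof -
    obtain k where k: "d = Suc k" using ad by (cases d) auto
    have "good (Suc k) (r (Suc k) (y k))" using y by blast
    then have "good d (vert d y)" using k X_r[OF yX, of k] by simp
    then show ?thesis unfolding good_def using ad by (auto simp: rch_def)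
  qed
  obtain x0 where x0: "x0 \<in> X" "vert a x0 = v" using through[OF vV] by blast
  define U where "U = {x\<in>X. x a \<in> {e. s (Suc a) e = v}}"
  have "openin T U" unfolding U_def by (rule open_coord)
  have "x0 \<in> T closure_of {g y |g. g \<in> fullgroup_set V E s r v0}"
    using min yX x0 unfolding acts_minimally_def by auto
  moreover have "x0 \<in> U" using x0 by (auto simp: U_def vert_def)
  ultimately obtain z where z: "z \<in> {g y |g. g \<in> fullgroup_set V E s r v0}" "z \<in> U"
    using \<open>openin T U\<close> unfolding in_closure_of by blast
  then obtain g n where g: "g \<in> GG n" "z = g y" unfolding fullgroup_set_def by blast
  have zX: "z \<in> X" using Gn_X[OF g(1) yX] g by simp
  have za: "vert a z = v" using z(2) by (auto simp: U_def vert_def)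
  define d where "d = max n (Suc a)"
  have "seg a d z \<in> fp a d (vert a z) (vert d z)" using seg_fp[OF zX] by (simp add: d_def)
  moreover have "vert d z = vert d y" using Gn_vert[OF g(1) yX] g(2) by (simp add: d_def)
  ultimately have "rch a d v (vert d y)" using za by (auto simp: rch_def d_def)
  moreover have "a < d" by (simp add: d_def)
  ultimately show False using ybad[of d] by blast
qed


lemma conn_mono:
  assumes "\<forall>w\<in>V b. fp a b v w \<noteq> {}" "a < b" "b < b'"
  shows "\<forall>w\<in>V b'. fp a b' v w \<noteq> {}"
proof
  fix w assume "w \<in> V b'"
  then obtain u where "u \<in> V b" "fp b b' u w \<noteq> {}" using backward assms by blast
  then show "fp a b' v w \<noteq> {}" using assms fp_trans by blast
qed

lemma conn_all:
  assumes min: "acts_minimally V E s r v0"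
  shows "\<exists>b>a. \<forall>v\<in>V a. \<forall>w\<in>V b. fp a b v w \<noteq> {}"
proof -
  obtain bf where bf: "\<forall>v\<in>V a. bf v > a \<and> (\<forall>w\<in>V (bf v). fp a (bf v) v w \<noteq> {})"
  proof -
    have "\<forall>v\<in>V a. \<exists>b. b > a \<and> (\<forall>w\<in>V b. fp a b v w \<noteq> {})" using minimal_conn[OF min] by blast
    then show ?thesis using that by (metis bchoice)
  qed
  define b where "b = Suc (Max (insert a (bf ` V a)))"
  have "b > a" using finV by (simp add: b_def le_imp_less_Suc)
  moreover have "\<forall>v\<in>V a. \<forall>w\<in>V b. fp a b v w \<noteq> {}"
  proof (intro ballI)
    fix v w assume v: "v \<in> V a" and w: "w \<in> V b"
    have "bf v < b" using finV v by (simp add: b_def le_imp_less_Suc)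
    then show "fp a b v w \<noteq> {}" using conn_mono[of b' a v "b"] bf v w conn_mono by blast
  qed
  ultimately show ?thesis by blast
qed

lemma even_mono:
  assumes "\<forall>w\<in>V b. even (card (fp a b v w))" "a < b" "b < b'"
  shows "\<forall>w\<in>V b'. even (card (fp a b' v w))"
proof
  fix w assume "w \<in> V b'"
  have "card (fp a b' v w) = (\<Sum>u\<in>V b. card (fp a b v u) * card (fp b b' u w))"
    using fp_card assms by blast
  moreover have "even (\<Sum>u\<in>V b. card (fp a b v u) * card (fp b b' u w))"
    using assms(1) by (intro dvd_sum) simp
  ultimately show "even (card (fp a b' v w))" by simp
qed

lemma even_down:
  assumes "\<forall>u\<in>V d. \<forall>w\<in>V b. even (card (fp d b u w))" "a < d" "d < b"
  shows "\<forall>v\<in>V a. \<forall>w\<in>V b. even (card (fp a b v w))"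
proof (intro ballI)
  fix v w assume "v \<in> V a" "w \<in> V b"
  have "card (fp a b v w) = (\<Sum>u\<in>V d. card (fp a d v u) * card (fp d b u w))"
    using fp_card assms by blast
  moreover have "even (\<Sum>u\<in>V d. card (fp a d v u) * card (fp d b u w))"
    using assms(1) \<open>w \<in> V b\<close> by (intro dvd_sum) simp
  ultimately show "even (card (fp a b v w))" by simp
qed

lemma even_all:
  assumes "\<forall>u\<in>V d. \<exists>b>d. \<forall>w\<in>V b. even (card (fp d b u w))"
  shows "\<exists>b>d. \<forall>u\<in>V d. \<forall>w\<in>V b. even (card (fp d b u w))"
proof -
  obtain bf where bf: "\<forall>u\<in>V d. bf u > d \<and> (\<forall>w\<in>V (bf u). even (card (fp d (bf u) u w)))"
  proof -
    have "\<forall>u\<in>V d. \<exists>b. b > d \<and> (\<forall>w\<in>V b. even (card (fp d b u w)))" using assms by blast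
    then show ?thesis using that by (metis bchoice)
  qed
  define b where "b = Suc (Max (insert d (bf ` V d)))"
  have "b > d" using finV by (simp add: b_def le_imp_less_Suc)
  moreover have "\<forall>u\<in>V d. \<forall>w\<in>V b. even (card (fp d b u w))"
  proof
    fix u assume u: "u \<in> V d"
    have "bf u < b" using finV u by (simp add: b_def le_imp_less_Suc)
    then show "\<forall>w\<in>V b. even (card (fp d b u w))" using even_mono bf u by blast
  qed
  ultimately show ?thesis by blast
qed

lemma assemble:
  assumes H1: "\<And>a. \<exists>b>a. \<forall>v\<in>V a. \<forall>w\<in>V b. fp a b v w \<noteq> {}"
    and H2: "\<And>a. \<exists>b>a. \<forall>v\<in>V a. \<forall>w\<in>V b. even (card (fp a b v w))"
  shows "\<exists>m :: nat \<Rightarrow> nat. m 0 = 0 \<and> strict_mono m \<and>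
           (\<forall>n. \<forall>v\<in>V (m n). \<forall>w\<in>V (m (Suc n)).
               even (card (fp (m n) (m (Suc n)) v w)) \<and> card (fp (m n) (m (Suc n)) v w) \<ge> 2)"
proof -
  have ex: "\<exists>b>a. \<forall>v\<in>V a. \<forall>w\<in>V b. fp a b v w \<noteq> {} \<and> even (card (fp a b v w))" for a
  proof -
    obtain b1 where b1: "b1 > a" "\<forall>v\<in>V a. \<forall>w\<in>V b1. fp a b1 v w \<noteq> {}" using H1 by blast
    obtain b2 where b2: "b2 > a" "\<forall>v\<in>V a. \<forall>w\<in>V b2. even (card (fp a b2 v w))" using H2 by blast
    define b where "b = Suc (max b1 b2)"
    have "\<forall>v\<in>V a. \<forall>w\<in>V b. fp a b v w \<noteq> {}"
      using conn_mono[of b1 a _ b] b1 by (simp add: b_def)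
    moreover have "\<forall>v\<in>V a. \<forall>w\<in>V b. even (card (fp a b v w))"
      using even_mono[of b2 a _ b] b2 by (simp add: b_def)
    moreover have "b > a" using b1 by (simp add: b_def)
    ultimately show ?thesis by blast
  qed
  define f where "f a = (SOME b. b > a \<and> (\<forall>v\<in>V a. \<forall>w\<in>V b. fp a b v w \<noteq> {} \<and> even (card (fp a b v w))))" for a
  have f: "f a > a \<and> (\<forall>v\<in>V a. \<forall>w\<in>V (f a). fp a (f a) v w \<noteq> {} \<and> even (card (fp a (f a) v w)))" for a
    unfolding f_def using someI_ex[OF ex[of a]] by blast
  define m where "m n = (f ^^ n) 0" for n
  have m0: "m 0 = 0" and mS: "m (Suc n) = f (m n)" for n by (simp_all add: m_def)
  have "strict_mono m" unfolding strict_mono_Suc_iff using f mS by simp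
  moreover have "\<forall>n. \<forall>v\<in>V (m n). \<forall>w\<in>V (m (Suc n)).
               even (card (fp (m n) (m (Suc n)) v w)) \<and> card (fp (m n) (m (Suc n)) v w) \<ge> 2"
  proof (intro allI ballI)
    fix n v w assume v: "v \<in> V (m n)" and w: "w \<in> V (m (Suc n))"
    have ne: "fp (m n) (m (Suc n)) v w \<noteq> {}" and ev: "even (card (fp (m n) (m (Suc n)) v w))"
      using f[of "m n"] v w mS by auto
    have "card (fp (m n) (m (Suc n)) v w) \<noteq> 0" using ne fp_finite by simp
    have aux: "\<And>k::nat. even k \<Longrightarrow> k \<noteq> 0 \<Longrightarrow> 2 \<le> k" by (auto elim!: evenE)
    with ev \<open>card (fp (m n) (m (Suc n)) v w) \<noteq> 0\<close> have "card (fp (m n) (m (Suc n)) v w) \<ge> 2" by blast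
    with ev show "even (card (fp (m n) (m (Suc n)) v w)) \<and> card (fp (m n) (m (Suc n)) v w) \<ge> 2" by simp
  qed
  ultimately show ?thesis using m0 by blast
qed

end

definition swp :: "'e list \<Rightarrow> 'e list \<Rightarrow> nat \<Rightarrow> 'e list set \<Rightarrow> 'e list \<Rightarrow> 'e list" where
  "swp p1 p2 d S q = (if \<exists>s\<in>S. q = p1 @ s then p2 @ drop d q
      else if \<exists>s\<in>S. q = p2 @ s then p1 @ drop d q else q)"

lemma swp_insert:
  assumes "length p1 = d" "length p2 = d" "p1 \<noteq> p2" "s \<notin> S"
  shows "swp p1 p2 d (insert s S) = Transposition.transpose (p1 @ s) (p2 @ s) \<circ> swp p1 p2 d S"
proof
  fix q
  have ne: "p1 @ a \<noteq> p2 @ b" for a b using assms by (metis append_eq_append_conv)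
  show "swp p1 p2 d (insert s S) q = (Transposition.transpose (p1 @ s) (p2 @ s) \<circ> swp p1 p2 d S) q"
  proof (cases "\<exists>s'\<in>insert s S. q = p1 @ s'")
    case True
    then obtain s' where s': "s' \<in> insert s S" "q = p1 @ s'" by blast
    show ?thesis
    proof (cases "s' = s")
      case True
      then have "swp p1 p2 d S q = q" using s' ne assms unfolding swp_def by auto
      then show ?thesis using s' True assms unfolding swp_def by (auto simp: Transposition.transpose_def)
    next
      case False
      then have "s' \<in> S" using s' by auto
      then have "swp p1 p2 d S q = p2 @ s'" using s' assms unfolding swp_def by auto
      moreover have "p2 @ s' \<noteq> p1 @ s" "p2 @ s' \<noteq> p2 @ s" using ne False by (auto simp: ne[symmetric])
      ultimately show ?thesis using s' \<open>s' \<in> S\<close> assms unfolding swp_def by (auto simp: Transposition.transpose_def)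
    qed
  next
    case F1: False
    show ?thesis
    proof (cases "\<exists>s'\<in>insert s S. q = p2 @ s'")
      case True
      then obtain s' where s': "s' \<in> insert s S" "q = p2 @ s'" by blast
      show ?thesis
      proof (cases "s' = s")
        case True
        then have "swp p1 p2 d S q = q" using s' ne assms unfolding swp_def by (auto simp: ne[symmetric])
        then show ?thesis using s' True assms F1 unfolding swp_def by (auto simp: Transposition.transpose_def)
      next
        case False
        then have "s' \<in> S" using s' by auto
        then have "swp p1 p2 d S q = p1 @ s'" using s' assms ne unfolding swp_def by (auto simp: ne[symmetric])
        moreover have "p1 @ s' \<noteq> p1 @ s" "p1 @ s' \<noteq> p2 @ s" using ne False by auto
        ultimately show ?thesis using s' \<open>s' \<in> S\<close> assms F1 unfolding swp_def by (auto simp: Transposition.transpose_def)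
      qed
    next
      case False
      then have "swp p1 p2 d S q = q" "swp p1 p2 d (insert s S) q = q" using F1 unfolding swp_def by auto
      moreover have "q \<noteq> p1 @ s" "q \<noteq> p2 @ s" using F1 False by auto
      ultimately show ?thesis by (simp add: Transposition.transpose_def)
    qed
  qed
qed

lemma swp_even:
  assumes "finite S" "length p1 = d" "length p2 = d" "p1 \<noteq> p2"
  shows "permutation (swp p1 p2 d S) \<and> (evenperm (swp p1 p2 d S) \<longleftrightarrow> even (card S))"
  using assms(1)
proof (induction S rule: finite_induct)
  case empty
  have "swp p1 p2 d {} = id" by (rule ext) (simp add: swp_def)
  then show ?case by simp
next
  case (insert s S)
  have eq: "swp p1 p2 d (insert s S) = Transposition.transpose (p1 @ s) (p2 @ s) \<circ> swp p1 p2 d S"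
    using swp_insert assms insert by blast
  have "p1 @ s \<noteq> p2 @ s" using assms by simp
  have P: "permutation (swp p1 p2 d S)" and Ev: "evenperm (swp p1 p2 d S) \<longleftrightarrow> even (card S)"
    using insert by auto
  have "permutation (Transposition.transpose (p1 @ s) (p2 @ s) \<circ> swp p1 p2 d S)"
    by (rule permutation_compose[OF permutation_swap_id P])
  moreover have "evenperm (Transposition.transpose (p1 @ s) (p2 @ s) \<circ> swp p1 p2 d S)
     = (evenperm (Transposition.transpose (p1 @ s) (p2 @ s)) = evenperm (swp p1 p2 d S))"
    by (rule evenperm_comp[OF permutation_swap_id P])
  moreover have "\<not> evenperm (Transposition.transpose (p1 @ s) (p2 @ s))"
    using \<open>p1 @ s \<noteq> p2 @ s\<close> by (simp add: evenperm_swap)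
  moreover have "even (card (insert s S)) \<longleftrightarrow> \<not> even (card S)" using insert by simp
  ultimately show ?case unfolding eq using Ev by argo
qed

context brat begin

definition ext :: "nat \<Rightarrow> 'e list \<Rightarrow> nat \<Rightarrow> 'e" where
  "ext m q = (SOME x. x \<in> X \<and> seg 0 m x = q)"

definition pii :: "((nat \<Rightarrow> 'e) \<Rightarrow> (nat \<Rightarrow> 'e)) \<Rightarrow> nat \<Rightarrow> 'v \<Rightarrow> 'e list \<Rightarrow> 'e list" where
  "pii g m w q = (if q \<in> fp 0 m v0 w then seg 0 m (g (ext m q)) else q)"

lemma seg_vert: "x \<in> X \<Longrightarrow> 0 < m \<Longrightarrow> seg 0 m x \<in> fp 0 m v0 (vert m x)"
  using seg_fp[of x 0 m] X_v0 by simp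

lemma ext_prop:
  assumes "q \<in> fp 0 m v0 w" "0 < m"
  shows "ext m q \<in> X" "seg 0 m (ext m q) = q" "vert m (ext m q) = w"
proof -
  have ex: "\<exists>x. x \<in> X \<and> seg 0 m x = q" using extend[OF assms] by blast
  show a: "ext m q \<in> X" "seg 0 m (ext m q) = q" unfolding ext_def using someI_ex[OF ex] by auto
  have "seg 0 m (ext m q) \<in> fp 0 m v0 (vert m (ext m q))" using seg_vert[OF a(1) assms(2)] .
  then have "r m (q!(m-1)) = vert m (ext m q)" using a unfolding fin_paths_def by auto
  moreover have "r m (q!(m-1)) = w" using assms unfolding fin_paths_def by auto
  ultimately show "vert m (ext m q) = w" by simp
qed

lemma pii_seg:
  assumes "g \<in> GG m" "x \<in> X" "0 < m" "vert m x = w"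
  shows "pii g m w (seg 0 m x) = seg 0 m (g x)"
proof -
  have q: "seg 0 m x \<in> fp 0 m v0 w" using seg_vert assms by auto
  show ?thesis unfolding pii_def using q ext_prop[OF q assms(3)] Gn_seg[OF assms(1) _ assms(2)] by simp
qed

lemma pii_in:
  assumes "g \<in> GG m" "0 < m" "q \<in> fp 0 m v0 w"
  shows "pii g m w q \<in> fp 0 m v0 w"
proof -
  let ?x = "ext m q"
  have x: "?x \<in> X" "seg 0 m ?x = q" "vert m ?x = w" using ext_prop assms by auto
  have "g ?x \<in> X" using Gn_X assms x by auto
  then have "seg 0 m (g ?x) \<in> fp 0 m v0 (vert m (g ?x))" using seg_vert assms by auto
  moreover have "vert m (g ?x) = w" using Gn_vert[OF assms(1) x(1)] x by simp
  ultimately show ?thesis unfolding pii_def using assms by simp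
qed

lemma pii_comp:
  assumes "g \<in> GG m" "h \<in> GG m" "0 < m"
  shows "pii (g \<circ> h) m w = pii g m w \<circ> pii h m w"
proof
  fix q
  show "pii (g \<circ> h) m w q = (pii g m w \<circ> pii h m w) q"
  proof (cases "q \<in> fp 0 m v0 w")
    case True
    let ?x = "ext m q"
    have x: "?x \<in> X" "seg 0 m ?x = q" "vert m ?x = w" using ext_prop True assms by auto
    have hx: "h ?x \<in> X" "vert m (h ?x) = w" using Gn_X Gn_vert assms x by auto
    have "pii h m w q = seg 0 m (h ?x)" using True by (simp add: pii_def)
    then have "(pii g m w \<circ> pii h m w) q = seg 0 m (g (h ?x))"
      using pii_seg[OF assms(1) hx(1) assms(3) hx(2)] by simp
    then show ?thesis using True by (simp add: pii_def)
  next
    case False then show ?thesis by (simp add: pii_def)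
  qed
qed

lemma pii_id: "0 < m \<Longrightarrow> pii id m w = id"
  by (rule ext) (auto simp: pii_def ext_prop)

lemma pii_perm:
  assumes "g \<in> GG m" "g' \<in> GG m" "0 < m" "g \<circ> g' = id" "g' \<circ> g = id"
  shows "permutation (pii g m w)"
proof -
  have "pii g m w \<circ> pii g' m w = id" "pii g' m w \<circ> pii g m w = id"
    using pii_comp[OF assms(1,2,3)] pii_comp[OF assms(2,1,3)] assms pii_id by auto
  then have b: "bij (pii g m w)" using o_bij by blast
  have "pii g m w permutes fp 0 m v0 w"
    unfolding permutes_def using b by (auto simp: pii_def bij_iff)
  then show ?thesis using fp_finite permutes_imp_permutation by blast
qed

end

context brat begin

definition splice :: "nat \<Rightarrow> 'e list \<Rightarrow> (nat \<Rightarrow> 'e) \<Rightarrow> nat \<Rightarrow> 'e" where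
  "splice d p x = (\<lambda>k. if k < d then p!k else x k)"

definition swapm :: "nat \<Rightarrow> 'e list \<Rightarrow> 'e list \<Rightarrow> (nat \<Rightarrow> 'e) \<Rightarrow> nat \<Rightarrow> 'e" where
  "swapm d p1 p2 x = (if x \<in> X \<and> seg 0 d x = p1 then splice d p2 x
     else if x \<in> X \<and> seg 0 d x = p2 then splice d p1 x else x)"

lemma fp_end_unique: "p \<in> fp a b v w \<Longrightarrow> p \<in> fp a b v w' \<Longrightarrow> w = w'"
  unfolding fin_paths_def by auto

lemma seg_end: "x \<in> X \<Longrightarrow> 0 < d \<Longrightarrow> seg 0 d x \<in> fp 0 d v0 u \<Longrightarrow> vert d x = u"
  using seg_vert fp_end_unique by blast

lemma splice_X:
  assumes "x \<in> X" "0 < d" "p \<in> fp 0 d v0 u" "vert d x = u"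
  shows "splice d p x \<in> X"
proof -
  have pE: "\<forall>i<d. p!i \<in> E (0+i+1)" and pC: "\<forall>i. Suc i < d \<longrightarrow> r (0+i+1) (p!i) = s (0+i+2) (p!Suc i)"
    and pS: "s (0+1) (p!0) = v0" and pR: "r d (p!(d-0-1)) = u"
    using assms(3) unfolding fin_paths_def by auto
  show ?thesis unfolding pathspace_def
  proof (intro CollectI conjI allI)
    fix k show "splice d p x k \<in> E (Suc k)" using pE X_E[OF assms(1)] by (simp add: splice_def)
  next
    show "s 1 (splice d p x 0) = v0" using pS assms(2) by (simp add: splice_def)
  next
    fix k
    consider "Suc k < d" | "Suc k = d" | "Suc k > d" by linarith
    then show "r (Suc k) (splice d p x k) = s (Suc (Suc k)) (splice d p x (Suc k))"
    proof cases
      case 1 then show ?thesis using pC by (simp add: splice_def)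
    next
      case 2
      then have "k = d - 1" by auto
      then show ?thesis using 2 pR assms(4) by (simp add: splice_def vert_def)
    next
      case 3 then show ?thesis using assms(1) unfolding pathspace_def splice_def by auto
    qed
  qed
qed

lemma seg_take: "d \<le> m \<Longrightarrow> seg 0 d x = take d (seg 0 m x)"
  unfolding seg_def by (simp add: take_map)

lemma seg_splice: "length p = d \<Longrightarrow> d \<le> m \<Longrightarrow> seg 0 m (splice d p x) = p @ drop d (seg 0 m x)"
  unfolding seg_def splice_def by (rule nth_equalityI) (auto simp: nth_append)

lemma seg_splice0: "length p = d \<Longrightarrow> seg 0 d (splice d p x) = p"
  using seg_splice[of p d d x] by (simp add: seg_def)

lemma splice_splice: "splice d p (splice d p' x) = splice d p x"
  unfolding splice_def by auto

lemma splice_seg: "splice d (seg 0 d x) x = x"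
  unfolding splice_def seg_def by auto

lemma vert_splice: "vert d (splice d p x) = vert d x"
  unfolding vert_def splice_def by simp

end

locale swapctx = brat V E s r v0 for V :: "nat \<Rightarrow> 'v set" and E :: "nat \<Rightarrow> 'e set"
    and s r :: "nat \<Rightarrow> 'e \<Rightarrow> 'v" and v0 :: 'v +
  fixes d :: nat and u :: 'v and p1 p2 :: "'e list"
  assumes d0: "0 < d" and p1: "p1 \<in> fin_paths V E s r 0 d v0 u"
    and p2: "p2 \<in> fin_paths V E s r 0 d v0 u" and p12: "p1 \<noteq> p2"
begin

abbreviation "sw \<equiv> swapm d p1 p2"

lemma lp1: "length p1 = d" and lp2: "length p2 = d" using p1 p2 fp_len by auto

lemma sw_X: "x \<in> X \<Longrightarrow> sw x \<in> X"
proof -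
  assume x: "x \<in> X"
  show ?thesis
  proof (cases "seg 0 d x = p1 \<or> seg 0 d x = p2")
    case True
    then have "vert d x = u" using seg_end x d0 p1 p2 by metis
    then show ?thesis using splice_X[OF x d0] p1 p2 x by (auto simp: swapm_def)
  next
    case False then show ?thesis using x by (auto simp: swapm_def)
  qed
qed

lemma sw_inv: "sw (sw x) = x"
proof (cases "x \<in> X \<and> (seg 0 d x = p1 \<or> seg 0 d x = p2)")
  case True
  then have x: "x \<in> X" "vert d x = u" using seg_end d0 p1 p2 by metis+
  show ?thesis
  proof (cases "seg 0 d x = p1")
    case c1: True
    have y: "splice d p2 x \<in> X" "seg 0 d (splice d p2 x) = p2"
      using splice_X[OF x(1) d0 p2 x(2)] seg_splice0[OF lp2] by auto
    have "sw x = splice d p2 x" using c1 x by (simp add: swapm_def)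
    moreover have "sw (splice d p2 x) = splice d p1 (splice d p2 x)" using y p12 by (simp add: swapm_def)
    moreover have "splice d p1 (splice d p2 x) = x" using splice_splice splice_seg c1 by metis
    ultimately show ?thesis by simp
  next
    case c2: False
    then have c2': "seg 0 d x = p2" using True by auto
    have y: "splice d p1 x \<in> X" "seg 0 d (splice d p1 x) = p1"
      using splice_X[OF x(1) d0 p1 x(2)] seg_splice0[OF lp1] by auto
    have "sw x = splice d p1 x" using c2 c2' x by (simp add: swapm_def)
    moreover have "sw (splice d p1 x) = splice d p2 (splice d p1 x)" using y p12 by (simp add: swapm_def)
    moreover have "splice d p2 (splice d p1 x) = x" using splice_splice splice_seg c2' by metis
    ultimately show ?thesis by simp
  qed
next
  case False
  then show ?thesis by (auto simp: swapm_def)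
qed

lemma sw_tail: "d \<le> k \<Longrightarrow> sw x k = x k"
  by (simp add: swapm_def splice_def)

lemma sw_loc:
  assumes "x \<in> X" "y \<in> X" "\<forall>j<d. x j = y j"
  shows "sw x = (\<lambda>k. if k < d then sw y k else x k)"
proof -
  have "seg 0 d x = seg 0 d y" using assms(3) by (simp add: seg_eq)
  then show ?thesis using assms by (auto simp: swapm_def splice_def fun_eq_iff)
qed

lemma sw_GG: "sw \<in> GG d"
proof -
  have cont: "continuous_map T T sw"
  proof (rule cont_local)
    show "\<And>x. x \<in> X \<Longrightarrow> sw x \<in> X" by (rule sw_X)
    fix k
    show "\<exists>n. \<forall>x\<in>X. \<forall>y\<in>X. (\<forall>j<n. x j = y j) \<longrightarrow> sw x k = sw y k"
    proof (intro exI[of _ "Suc (d + k)"] ballI impI)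
      fix x y assume xy: "x \<in> X" "y \<in> X" "\<forall>j<Suc (d + k). x j = y j"
      then have "\<forall>j<d. x j = y j" by auto
      then have "sw x = (\<lambda>k. if k < d then sw y k else x k)" using sw_loc xy by blast
      then have "sw x k = (if k < d then sw y k else x k)" by (rule fun_cong)
      moreover have "\<not> k < d \<Longrightarrow> sw y k = y k" using sw_tail by simp
      ultimately show "sw x k = sw y k" using xy(3) by (cases "k < d") auto
    qed
  qed
  have "homeomorphic_maps T T sw sw"
    unfolding homeomorphic_maps_def using cont sw_inv by auto
  then have "homeomorphic_map T T sw" using homeomorphic_map_maps by blast
  moreover have "\<forall>x. x \<notin> X \<longrightarrow> sw x = x" by (simp add: swapm_def)
  moreover have "\<forall>x\<in>X. \<forall>k\<ge>d. sw x k = x k" using sw_tail by blast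
  moreover have "\<forall>x\<in>X. \<forall>y\<in>X. (\<forall>k<d. x k = y k) \<longrightarrow> (\<forall>k<d. sw x k = sw y k)"
  proof (intro ballI impI allI)
    fix x y k assume xy: "x \<in> X" "y \<in> X" "\<forall>k<d. x k = y k" and k: "k < d"
    have "sw x = (\<lambda>k. if k < d then sw y k else x k)" using sw_loc[OF xy] .
    then have "sw x k = (if k < d then sw y k else x k)" by (rule fun_cong)
    then show "sw x k = sw y k" using k by simp
  qed
  ultimately show ?thesis unfolding Gn_def by blast
qed

lemma sw_pii:
  assumes dm: "d < m"
  shows "pii sw m w = swp p1 p2 d (fp d m u w)"
proof
  fix q
  have m0: "0 < m" using dm d0 by auto
  show "pii sw m w q = swp p1 p2 d (fp d m u w) q"
  proof (cases "q \<in> fp 0 m v0 w")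
    case True
    let ?x = "ext m q"
    have x: "?x \<in> X" "seg 0 m ?x = q" "vert m ?x = w" using ext_prop True m0 by auto
    have tk: "seg 0 d ?x = take d q" using seg_take[of d m] dm x by auto
    have pq: "pii sw m w q = seg 0 m (sw ?x)" using True by (simp add: pii_def)
    have dr: "drop d q \<in> fp d m u w" if "take d q = p1 \<or> take d q = p2"
    proof -
      have a: "take (d-0) q \<in> fp 0 d v0 (r d (q!(d-0-1)))" "drop (d-0) q \<in> fp d m (r d (q!(d-0-1))) w"
        using fp_split[OF d0 dm True] by auto
      have "r d (q!(d-0-1)) = u" using a(1) that p1 p2 fp_end_unique by auto
      then show ?thesis using a by simp
    qed
    have ap: "(\<exists>s\<in>S. q = p @ s) \<longleftrightarrow> take d q = p \<and> drop d q \<in> S" if "length p = d" for p S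
      using that by (metis append_take_drop_id append_eq_conv_conj)
    consider "take d q = p1" | "take d q = p2" | "take d q \<noteq> p1 \<and> take d q \<noteq> p2" by blast
    then show ?thesis
    proof cases
      case 1
      have "sw ?x = splice d p2 ?x" using x tk 1 by (simp add: swapm_def)
      then have "seg 0 m (sw ?x) = p2 @ drop d q" using seg_splice[OF lp2] dm x by simp
      moreover have "\<exists>s\<in>fp d m u w. q = p1 @ s" using ap[OF lp1] 1 dr by blast
      ultimately show ?thesis using pq by (simp add: swp_def)
    next
      case 2
      have "sw ?x = splice d p1 ?x" using x tk 2 p12 by (simp add: swapm_def)
      then have "seg 0 m (sw ?x) = p1 @ drop d q" using seg_splice[OF lp1] dm x by simp
      moreover have "\<exists>s\<in>fp d m u w. q = p2 @ s" using ap[OF lp2] 2 dr by blast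
      moreover have "\<not> (\<exists>s\<in>fp d m u w. q = p1 @ s)" using ap[OF lp1, of "fp d m u w"] 2 p12 by simp
      ultimately show ?thesis using pq by (simp add: swp_def)
    next
      case 3
      have "sw ?x = ?x" using x tk 3 by (simp add: swapm_def)
      moreover have "\<not> (\<exists>s\<in>fp d m u w. q = p1 @ s)" "\<not> (\<exists>s\<in>fp d m u w. q = p2 @ s)"
        using ap[OF lp1, of "fp d m u w"] ap[OF lp2, of "fp d m u w"] 3 by simp_all
      ultimately show ?thesis using pq x by (simp add: swp_def)
    qed
  next
    case False
    have "\<not> (\<exists>s\<in>fp d m u w. q = p1 @ s)" "\<not> (\<exists>s\<in>fp d m u w. q = p2 @ s)"
      using False fp_append[OF d0 dm p1] fp_append[OF d0 dm p2] by blast+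
    then show ?thesis using False by (simp add: pii_def swp_def)
  qed
qed

lemma sw_even: "d < m \<Longrightarrow> evenperm (pii sw m w) \<longleftrightarrow> even (card (fp d m u w))"
  using sw_pii swp_even[OF fp_finite lp1 lp2 p12] by simp

end

context brat begin

abbreviation "GR \<equiv> fullgroup V E s r v0"

lemma car_lvl: "g \<in> carrier GR \<Longrightarrow> \<exists>L. \<forall>m\<ge>L. g \<in> GG m"
  using carrier_G Gn_mono by blast

lemma car_GG: "g \<in> GG n \<Longrightarrow> g \<in> carrier GR"
  using carrier_G by blast

context
  assumes grp: "group GR"
begin

lemma ginv: "g \<in> carrier GR \<Longrightarrow> g \<circ> inv\<^bsub>GR\<^esub> g = id \<and> inv\<^bsub>GR\<^esub> g \<circ> g = id"
  using group.r_inv[OF grp] group.l_inv[OF grp] by (simp add: mult_G one_G)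

lemma g_perm:
  assumes "g \<in> carrier GR" "g \<in> GG m" "inv\<^bsub>GR\<^esub> g \<in> GG m" "0 < m"
  shows "permutation (pii g m w)"
  using pii_perm[OF assms(2,3,4)] ginv[OF assms(1)] by blast

lemma lvl2: "g \<in> carrier GR \<Longrightarrow> \<exists>L>0. \<forall>m\<ge>L. g \<in> GG m \<and> inv\<^bsub>GR\<^esub> g \<in> GG m \<and> permutation (pii g m w)"
proof -
  assume g: "g \<in> carrier GR"
  obtain L1 where L1: "\<forall>m\<ge>L1. g \<in> GG m" using car_lvl g by blast
  obtain L2 where L2: "\<forall>m\<ge>L2. inv\<^bsub>GR\<^esub> g \<in> GG m" using car_lvl group.inv_closed[OF grp g] by blast
  show ?thesis
    by (rule exI[of _ "Suc (max L1 L2)"]) (use L1 L2 g_perm g in auto)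
qed

definition NN :: "((nat \<Rightarrow> 'e) \<Rightarrow> (nat \<Rightarrow> 'e)) set" where
  "NN = {g \<in> carrier GR. \<exists>m0. \<forall>m>m0. \<forall>w\<in>V m. evenperm (pii g m w)}"

lemma NN_normal: "NN \<lhd> GR"
proof -
  have one: "id \<in> carrier GR" using monoid.one_closed[OF group.is_monoid[OF grp]] by (simp add: one_G)
  have sub: "subgroup NN GR"
  proof (rule group.subgroupI[OF grp])
    show "NN \<subseteq> carrier GR" by (auto simp: NN_def)
    have "id \<in> NN" unfolding NN_def using one pii_id by (intro CollectI conjI exI[of _ 0]) auto
    then show "NN \<noteq> {}" by blast
  next
    fix a assume a: "a \<in> NN"
    then have ac: "a \<in> carrier GR" and "\<exists>m0. \<forall>m>m0. \<forall>w\<in>V m. evenperm (pii a m w)" by (auto simp: NN_def)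
    then obtain m0 where m0: "\<forall>m>m0. \<forall>w\<in>V m. evenperm (pii a m w)" by blast
    let ?i = "inv\<^bsub>GR\<^esub> a"
    have ic: "?i \<in> carrier GR" using group.inv_closed[OF grp ac] .
    obtain L where L: "L > 0" "\<forall>m\<ge>L. a \<in> GG m \<and> ?i \<in> GG m" using lvl2[OF ac] by blast
    have "\<forall>m>max m0 L. \<forall>w\<in>V m. evenperm (pii ?i m w)"
    proof (intro allI impI ballI)
      fix m w assume m: "max m0 L < m" and w: "w \<in> V m"
      have G: "a \<in> GG m" "?i \<in> GG m" "0 < m" using L m by auto
      have Pa: "permutation (pii a m w)" using g_perm[OF ac G(1,2,3)] .
      have ii: "inv\<^bsub>GR\<^esub> ?i = a" using group.inv_inv[OF grp ac] .
      have Pi: "permutation (pii ?i m w)" using g_perm[OF ic G(2)] G ii by simp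
      have "pii ?i m w \<circ> pii a m w = id" using pii_comp[OF G(2,1,3)] ginv[OF ac] pii_id G by simp
      then have "evenperm (pii ?i m w) = evenperm (pii a m w)" using evenperm_comp[OF Pi Pa] by simp
      then show "evenperm (pii ?i m w)" using m0 m w by auto
    qed
    then show "?i \<in> NN" unfolding NN_def using ic by blast
  next
    fix a b assume a: "a \<in> NN" and b: "b \<in> NN"
    then have ac: "a \<in> carrier GR" and bc: "b \<in> carrier GR" by (auto simp: NN_def)
    obtain ma where ma: "\<forall>m>ma. \<forall>w\<in>V m. evenperm (pii a m w)" using a by (auto simp: NN_def)
    obtain mb where mb: "\<forall>m>mb. \<forall>w\<in>V m. evenperm (pii b m w)" using b by (auto simp: NN_def)
    obtain La where La: "La > 0" "\<forall>m\<ge>La. a \<in> GG m \<and> inv\<^bsub>GR\<^esub> a \<in> GG m" using lvl2[OF ac] by blast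
    obtain Lb where Lb: "Lb > 0" "\<forall>m\<ge>Lb. b \<in> GG m \<and> inv\<^bsub>GR\<^esub> b \<in> GG m" using lvl2[OF bc] by blast
    have abc: "a \<otimes>\<^bsub>GR\<^esub> b \<in> carrier GR" using monoid.m_closed[OF group.is_monoid[OF grp] ac bc] .
    have "\<forall>m>max (max ma mb) (max La Lb). \<forall>w\<in>V m. evenperm (pii (a \<circ> b) m w)"
    proof (intro allI impI ballI)
      fix m w assume m: "max (max ma mb) (max La Lb) < m" and w: "w \<in> V m"
      have GA: "a \<in> GG m" "inv\<^bsub>GR\<^esub> a \<in> GG m" "0 < m" using La m by auto
      have GB: "b \<in> GG m" "inv\<^bsub>GR\<^esub> b \<in> GG m" using Lb m by auto
      have Pa: "permutation (pii a m w)" using g_perm[OF ac GA] .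
      have Pb: "permutation (pii b m w)" using g_perm[OF bc GB GA(3)] .
      have "pii (a \<circ> b) m w = pii a m w \<circ> pii b m w" using pii_comp[OF GA(1) GB(1) GA(3)] .
      then show "evenperm (pii (a \<circ> b) m w)" using evenperm_comp[OF Pa Pb] ma mb m w by auto
    qed
    then have "\<exists>m0. \<forall>m>m0. \<forall>w\<in>V m. evenperm (pii (a \<circ> b) m w)" by blast
    then show "a \<otimes>\<^bsub>GR\<^esub> b \<in> NN" unfolding NN_def using abc by (simp add: mult_G)
  qed
  have "\<forall>x\<in>carrier GR. \<forall>h\<in>NN. x \<otimes>\<^bsub>GR\<^esub> h \<otimes>\<^bsub>GR\<^esub> inv\<^bsub>GR\<^esub> x \<in> NN"
  proof (intro ballI)
    fix x h assume xc: "x \<in> carrier GR" and h: "h \<in> NN"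
    have hc: "h \<in> carrier GR" using h by (auto simp: NN_def)
    obtain mh where mh: "\<forall>m>mh. \<forall>w\<in>V m. evenperm (pii h m w)" using h by (auto simp: NN_def)
    let ?i = "inv\<^bsub>GR\<^esub> x"
    have ic: "?i \<in> carrier GR" using group.inv_closed[OF grp xc] .
    have xhc: "x \<circ> h \<in> carrier GR" using monoid.m_closed[OF group.is_monoid[OF grp] xc hc] by (simp add: mult_G)
    have allc: "x \<circ> h \<circ> ?i \<in> carrier GR" using monoid.m_closed[OF group.is_monoid[OF grp] xhc ic] by (simp add: mult_G)
    obtain Lx where Lx: "Lx > 0" "\<forall>m\<ge>Lx. x \<in> GG m \<and> ?i \<in> GG m" using lvl2[OF xc] by blast
    obtain Lh where Lh: "Lh > 0" "\<forall>m\<ge>Lh. h \<in> GG m \<and> inv\<^bsub>GR\<^esub> h \<in> GG m" using lvl2[OF hc] by blast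
    obtain Lxh where Lxh: "\<forall>m\<ge>Lxh. x \<circ> h \<in> GG m" using car_lvl[OF xhc] by blast
    have "\<forall>m>max mh (max Lxh (max Lx Lh)). \<forall>w\<in>V m. evenperm (pii (x \<circ> h \<circ> ?i) m w)"
    proof (intro allI impI ballI)
      fix m w assume m: "max mh (max Lxh (max Lx Lh)) < m" and w: "w \<in> V m"
      have GX: "x \<in> GG m" "?i \<in> GG m" "0 < m" using Lx m by auto
      have GH: "h \<in> GG m" "inv\<^bsub>GR\<^esub> h \<in> GG m" using Lh m by auto
      have GXH: "x \<circ> h \<in> GG m" using Lxh m by auto
      have ii: "inv\<^bsub>GR\<^esub> ?i = x" using group.inv_inv[OF grp xc] .
      have Px: "permutation (pii x m w)" using g_perm[OF xc GX] .
      have Pi: "permutation (pii ?i m w)" using g_perm[OF ic GX(2)] GX ii by simp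
      have Ph: "permutation (pii h m w)" using g_perm[OF hc GH GX(3)] .
      have eq: "pii (x \<circ> h \<circ> ?i) m w = (pii x m w \<circ> pii h m w) \<circ> pii ?i m w"
        using pii_comp[OF GXH GX(2,3)] pii_comp[OF GX(1) GH(1) GX(3)] by simp
      have "pii x m w \<circ> pii ?i m w = id" using pii_comp[OF GX(1,2,3)] ginv[OF xc] pii_id GX by simp
      then have exi: "evenperm (pii x m w) = evenperm (pii ?i m w)" using evenperm_comp[OF Px Pi] by simp
      have eh: "evenperm (pii h m w)" using mh m w by auto
      have "evenperm ((pii x m w \<circ> pii h m w) \<circ> pii ?i m w)
          = (evenperm (pii x m w \<circ> pii h m w) = evenperm (pii ?i m w))"
        by (rule evenperm_comp[OF permutation_compose[OF Px Ph] Pi])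
      moreover have "evenperm (pii x m w \<circ> pii h m w) = (evenperm (pii x m w) = evenperm (pii h m w))"
        by (rule evenperm_comp[OF Px Ph])
      ultimately show "evenperm (pii (x \<circ> h \<circ> ?i) m w)" unfolding eq using exi eh by argo
    qed
    then have "\<exists>m0. \<forall>m>m0. \<forall>w\<in>V m. evenperm (pii (x \<circ> h \<circ> ?i) m w)" by blast
    then show "x \<otimes>\<^bsub>GR\<^esub> h \<otimes>\<^bsub>GR\<^esub> inv\<^bsub>GR\<^esub> x \<in> NN" unfolding NN_def using allc by (simp add: mult_G)
  qed
  then show ?thesis using group.normal_inv_iff[OF grp] sub by blast
qed

lemma NN_sq: "g \<in> carrier GR \<Longrightarrow> g \<circ> g \<in> NN"
proof -
  assume gc: "g \<in> carrier GR"
  have ggc: "g \<circ> g \<in> carrier GR" using monoid.m_closed[OF group.is_monoid[OF grp] gc gc] by (simp add: mult_G)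
  obtain L where L: "L > 0" "\<forall>m\<ge>L. g \<in> GG m \<and> inv\<^bsub>GR\<^esub> g \<in> GG m" using lvl2[OF gc] by blast
  have "\<forall>m>L. \<forall>w\<in>V m. evenperm (pii (g \<circ> g) m w)"
  proof (intro allI impI ballI)
    fix m w assume m: "L < m" and w: "w \<in> V m"
    have G: "g \<in> GG m" "inv\<^bsub>GR\<^esub> g \<in> GG m" "0 < m" using L m by auto
    have P: "permutation (pii g m w)" using g_perm[OF gc G] .
    have "pii (g \<circ> g) m w = pii g m w \<circ> pii g m w" using pii_comp[OF G(1) G(1) G(3)] .
    then show "evenperm (pii (g \<circ> g) m w)" using evenperm_comp[OF P P] by simp
  qed
  then show ?thesis unfolding NN_def using ggc by blast
qed

end
end

context brat begin

lemma cantor_infinite: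
  assumes cant: "is_cantor_space T"
  shows "infinite X"
proof
  assume fin: "finite X"
  obtain f where f: "homeomorphic_map T (product_topology (\<lambda>_::nat. discrete_topology (UNIV :: bool set)) UNIV) f"
    using cant unfolding is_cantor_space_def homeomorphic_space by blast
  have "f ` X = UNIV" using homeomorphic_imp_surjective_map[OF f] topT by simp
  then have "finite (UNIV :: (nat \<Rightarrow> bool) set)" using fin by (metis finite_imageI)
  moreover have "inj (\<lambda>n::nat. \<lambda>k::nat. k = n)" by (auto simp: inj_def fun_eq_iff)
  ultimately have "finite (UNIV :: nat set)"
    by (metis finite_imageD finite_subset subset_UNIV)
  then show False by simp
qed

lemma T_t1: "t1_space T"
proof -
  have "Hausdorff_space (product_topology (\<lambda>k. discrete_topology (E (Suc k))) UNIV)"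
    by (simp add: Hausdorff_space_product_topology)
  then have "Hausdorff_space T" unfolding pathtop_def by (rule Hausdorff_space_subtopology)
  then show ?thesis by (rule Hausdorff_imp_t1_space)
qed

lemma main_brat:
  assumes cant: "is_cantor_space T" and min: "acts_minimally V E s r v0"
    and sng: "simple_nontrivial_group GR"
  shows "\<exists>m :: nat \<Rightarrow> nat. m 0 = 0 \<and> strict_mono m \<and>
           (\<forall>n. \<forall>v\<in>V (m n). \<forall>w\<in>V (m (Suc n)).
               even (card (fp (m n) (m (Suc n)) v w)) \<and> card (fp (m n) (m (Suc n)) v w) \<ge> 2)"
proof -
  have grp: "group GR" and ntriv: "carrier GR \<noteq> {id}"
    and smp: "\<And>H. H \<lhd> GR \<Longrightarrow> H = {id} \<or> H = carrier GR"
    using sng unfolding simple_nontrivial_group_def by (auto simp: one_G)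
  have idc: "id \<in> carrier GR" using monoid.one_closed[OF group.is_monoid[OF grp]] by (simp add: one_G)
  obtain g where gc: "g \<in> carrier GR" and gid: "g \<noteq> id" using ntriv idc by blast
  have H1: "\<And>a. \<exists>b>a. \<forall>v\<in>V a. \<forall>w\<in>V b. fp a b v w \<noteq> {}" using conn_all[OF min] by blast
  have mc: "a \<circ> b \<in> carrier GR" if "a \<in> carrier GR" "b \<in> carrier GR" for a b
    using monoid.m_closed[OF group.is_monoid[OF grp] that] by (simp add: mult_G)
  show ?thesis
  proof (cases "NN = {id}")
    case True
    have sq: "a \<circ> a = id" if "a \<in> carrier GR" for a using NN_sq[OF grp that] True by blast
    have comm: "a \<circ> b = b \<circ> a" if ab: "a \<in> carrier GR" "b \<in> carrier GR" for a b
    proof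
      fix x
      have aa: "a (a y) = y" for y using sq[OF ab(1)] by (metis comp_apply id_apply)
      have bb: "b (b y) = y" for y using sq[OF ab(2)] by (metis comp_apply id_apply)
      have abab: "a (b (a (b y))) = y" for y using sq[OF mc[OF ab]] by (metis comp_apply id_apply)
      have "a (b (a (b (b (a x))))) = b (a x)" by (rule abab)
      then show "(a \<circ> b) x = (b \<circ> a) x" using aa bb by simp
    qed
    have ig: "inv\<^bsub>GR\<^esub> g = g" using group.inv_equality[OF grp _ gc gc] sq[OF gc] by (simp add: mult_G one_G)
    define H where "H = {id, g}"
    have subH: "subgroup H GR"
    proof (rule group.subgroupI[OF grp])
      show "H \<subseteq> carrier GR" using idc gc by (auto simp: H_def)
      show "H \<noteq> {}" by (simp add: H_def)
    next
      fix a assume "a \<in> H"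
      moreover have "inv\<^bsub>GR\<^esub> id = id" using monoid.inv_one[OF group.is_monoid[OF grp]] by (simp add: one_G)
      ultimately show "inv\<^bsub>GR\<^esub> a \<in> H" using ig by (auto simp: H_def)
    next
      fix a b assume "a \<in> H" "b \<in> H"
      then show "a \<otimes>\<^bsub>GR\<^esub> b \<in> H" using sq[OF gc] by (auto simp: H_def mult_G)
    qed
    have "H \<lhd> GR"
      unfolding group.normal_inv_iff[OF grp]
    proof (intro conjI subH ballI)
      fix x h assume xc: "x \<in> carrier GR" and h: "h \<in> H"
      have xi: "x \<circ> inv\<^bsub>GR\<^esub> x = id" using ginv[OF grp xc] by blast
      show "x \<otimes>\<^bsub>GR\<^esub> h \<otimes>\<^bsub>GR\<^esub> inv\<^bsub>GR\<^esub> x \<in> H"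
      proof (cases "h = id")
        case True then show ?thesis using xi by (simp add: mult_G H_def)
      next
        case False
        then have "h = g" using h by (simp add: H_def)
        then have "x \<circ> h \<circ> inv\<^bsub>GR\<^esub> x = g \<circ> (x \<circ> inv\<^bsub>GR\<^esub> x)" using comm[OF xc gc] by (simp add: o_assoc)
        then show ?thesis using xi by (simp add: mult_G H_def)
      qed
    qed
    then have "H = carrier GR" using smp gid by (auto simp: H_def)
    obtain x0 where x0: "x0 \<in> X" using X_ne by blast
    have orb: "{h x0 |h. h \<in> fullgroup_set V E s r v0} = {x0, g x0}"
    proof -
      have fs: "fullgroup_set V E s r v0 = {id, g}" using \<open>H = carrier GR\<close> by (simp add: H_def fullgroup_def)
      have "{h x0 |h. h \<in> {id, g}} = {x0, g x0}"
      proof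
        show "{h x0 |h. h \<in> {id, g}} \<subseteq> {x0, g x0}" by auto
        show "{x0, g x0} \<subseteq> {h x0 |h. h \<in> {id, g}}"
        proof
          fix y assume "y \<in> {x0, g x0}"
          then have "y = id x0 \<or> y = g x0" by auto
          then show "y \<in> {h x0 |h. h \<in> {id, g}}" by blast
        qed
      qed
      then show ?thesis unfolding fs .
    qed
    have gx0: "g x0 \<in> X" using gc x0 Gn_X carrier_G by blast
    have "closedin T {x0, g x0}" using T_t1 x0 gx0 topT by (simp add: t1_space_closedin_finite)
    then have "T closure_of {x0, g x0} = {x0, g x0}" by (rule closure_of_closedin)
    moreover have "T closure_of {h x0 |h. h \<in> fullgroup_set V E s r v0} = X"
      using min x0 unfolding acts_minimally_def by blast
    ultimately have "X = {x0, g x0}" unfolding orb by simp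
    then have "finite X" by simp
    then show ?thesis using cantor_infinite[OF cant] by simp
  next
    case False
    then have NNc: "NN = carrier GR" using smp[OF NN_normal[OF grp]] by blast
    obtain n0 where gn: "g \<in> GG n0" using gc carrier_G by blast
    obtain x where gxx: "g x \<noteq> x" using gid by (auto simp: fun_eq_iff)
    then have xX: "x \<in> X" using Gn_off[OF gn] by blast
    then obtain k where k: "g x k \<noteq> x k" using gxx by (auto simp: fun_eq_iff)
    then have kn: "k < n0" using Gn_tail[OF gn xX] by (meson not_le)
    then have n0: "0 < n0" by simp
    let ?z = "vert n0 x"
    have gX: "g x \<in> X" using Gn_X[OF gn xX] .
    have q1: "seg 0 n0 (g x) \<in> fp 0 n0 v0 ?z" using seg_vert[OF gX n0] Gn_vert[OF gn xX] by simp
    have q2: "seg 0 n0 x \<in> fp 0 n0 v0 ?z" using seg_vert[OF xX n0] .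
    have q12: "seg 0 n0 (g x) \<noteq> seg 0 n0 x" using k kn by (auto simp: seg_eq)
    have zV: "?z \<in> V n0" using X_vert[OF xX] .
    obtain c where c: "c > n0" "\<forall>v\<in>V n0. \<forall>w\<in>V c. fp n0 c v w \<noteq> {}" using H1 by blast
    have reach: "fp n0 d ?z u \<noteq> {}" if "c \<le> d" "u \<in> V d" for d u
    proof (cases "d = c")
      case True then show ?thesis using c zV that by auto
    next
      case False
      then have "c < d" using that by auto
      then show ?thesis using conn_mono[of c n0 ?z d] c zV that by auto
    qed
    have ev1: "\<exists>b>d. \<forall>w\<in>V b. even (card (fp d b u w))" if d: "c \<le> d" and u: "u \<in> V d" for d u
    proof -
      obtain q where q: "q \<in> fp n0 d ?z u" using reach[OF d u] by blast
      have nd: "n0 < d" using c d by auto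
      let ?p1 = "seg 0 n0 (g x) @ q" and ?p2 = "seg 0 n0 x @ q"
      have P1: "?p1 \<in> fp 0 d v0 u" using fp_append[OF n0 nd q1 q] .
      have P2: "?p2 \<in> fp 0 d v0 u" using fp_append[OF n0 nd q2 q] .
      have P12: "?p1 \<noteq> ?p2" using q12 by simp
      interpret sc: swapctx V E s r v0 d u ?p1 ?p2
        by unfold_locales (use B nd P1 P2 P12 in auto)
      have "sc.sw \<in> carrier GR" using sc.sw_GG carrier_G by blast
      then have "sc.sw \<in> NN" using NNc by simp
      then have "\<exists>m0. \<forall>m>m0. \<forall>w\<in>V m. evenperm (pii sc.sw m w)"
        by (simp add: NN_def[OF grp])
      then obtain m0 where m0: "\<forall>m>m0. \<forall>w\<in>V m. evenperm (pii sc.sw m w)" by blast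
      define b where "b = Suc (max m0 d)"
      have bd: "d < b" "m0 < b" by (auto simp: b_def)
      have "\<forall>w\<in>V b. even (card (fp d b u w))"
      proof
        fix w assume "w \<in> V b"
        then have "evenperm (pii sc.sw b w)" using m0 bd by blast
        then show "even (card (fp d b u w))" using sc.sw_even[OF bd(1)] by simp
      qed
      then show ?thesis by (intro exI[of _ b]) (simp add: b_def)
    qed
    have H2: "\<exists>b>a. \<forall>v\<in>V a. \<forall>w\<in>V b. even (card (fp a b v w))" for a
    proof -
      define d where "d = max c (Suc a)"
      obtain b where b: "b > d" "\<forall>u\<in>V d. \<forall>w\<in>V b. even (card (fp d b u w))"
        using even_all[of d] ev1[of d] by (auto simp: d_def)
      have "\<forall>v\<in>V a. \<forall>w\<in>V b. even (card (fp a b v w))"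
        using even_down[OF b(2)] b(1) by (simp add: d_def)
      then show ?thesis using b(1) by (intro exI[of _ b]) (simp add: d_def)
    qed
    show ?thesis by (rule assemble[OF H1 H2])
  qed
qed

end

theorem mainTheorem4:
  fixes V :: "nat \<Rightarrow> 'v set" and E :: "nat \<Rightarrow> 'e set"
    and s r :: "nat \<Rightarrow> 'e \<Rightarrow> 'v" and v0 :: 'v
  assumes "bratteli V E s r v0"
    and "is_cantor_space (pathtop V E s r v0)"
    and "acts_minimally V E s r v0"
    and "simple_nontrivial_group (fullgroup V E s r v0)"
  shows "\<exists>m :: nat \<Rightarrow> nat. m 0 = 0 \<and> strict_mono m \<and>
           (\<forall>n. \<forall>v\<in>V (m n). \<forall>w\<in>V (m (Suc n)).
               even (card (fin_paths V E s r (m n) (m (Suc n)) v w)) \<and>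
               card (fin_paths V E s r (m n) (m (Suc n)) v w) \<ge> 2)"
proof -
  interpret brat V E s r v0 by unfold_locales (rule assms(1))
  show ?thesis using main_brat assms(2-4) by blast
qed

end
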